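(* Under all the hypotheses of the I-UKF stability theorem recalled in the context (conditions (C1)–(C8) together with the standing assumptions listed there), the Jacobian of the $i$-th forward-UKF measurement-update sigma point $\mathbf{q}_{i,k+1|k}$ with respect to the forward state estimate $\hat{\mathbf{x}}_k$ (with $\boldsymbol{\Sigma}_k$ held fixed) satisfies $\left\|\frac{\partial\mathbf{q}_{i,k+1|k}}{\partial\hat{\mathbf{x}}_k}\right\|\le c'$ for all $k\ge0$ and all $0\le i\le 2n_x$, for some positive real constant $c'$.
   Context: Forward system $\mathbf{x}_{k+1}=f(\mathbf{x}_k)+\mathbf{w}_k$, $\mathbf{y}_k=h(\mathbf{x}_k)+\mathbf{v}_k$ with $f:\mathbb{R}^{n_x}\to\mathbb{R}^{n_x}$, $h:\mathbb{R}^{n_x}\to\mathbb{R}^{n_y}$ differentiable, $\mathbf{w}_k\sim\mathcal{N}(\mathbf{0},\mathbf{Q}_k)$, $\mathbf{v}_k\sim\mathcal{N}(\mathbf{0},\mathbf{R}_k)$; defender observation $\mathbf{a}_k=g(\hat{\mathbf{x}}_k)+\boldsymbol{\epsilon}_k$, $\boldsymbol{\epsilon}_k\sim\mathcal{N}(\mathbf{0},\overline{\mathbf{R}}_k)$, $g$ differentiable. Sigma points with parameter $\kappa$: $S_{gen}(\hat{\mathbf{x}},\boldsymbol{\Sigma})$ consists of $\hat{\mathbf{x}}$ and $\hat{\mathbf{x}}\pm[\sqrt{(n_x+\kappa)\boldsymbol{\Sigma}}]_{(:,i)}$, $1\le i\le n_x$ ($\sqrt{\cdot}$ the lower-triangular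 Cholesky factor), weights $\omega_0=\kappa/(n_x+\kappa)$, $\omega_i=1/(2(n_x+\kappa))$. Forward UKF: $\{\mathbf{s}_{i,k}\}=S_{gen}(\hat{\mathbf{x}}_k,\boldsymbol{\Sigma}_k)$, $\mathbf{s}^*_{i,k+1|k}=f(\mathbf{s}_{i,k})$, $\hat{\mathbf{x}}_{k+1|k}=\sum_i\omega_i\mathbf{s}^*_{i,k+1|k}$, $\boldsymbol{\Sigma}_{k+1|k}=\sum_i\omega_i\mathbf{s}^*_i\mathbf{s}^{*T}_i-\hat{\mathbf{x}}_{k+1|k}\hat{\mathbf{x}}_{k+1|k}^T+\mathbf{Q}_k$, $\{\mathbf{q}_{i,k+1|k}\}=S_{gen}(\hat{\mathbf{x}}_{k+1|k},\boldsymbol{\Sigma}_{k+1|k})$, $\mathbf{q}^*_i=h(\mathbf{q}_i)$, $\hat{\mathbf{y}}_{k+1|k}=\sum\omega_i\mathbf{q}^*_i$, $\boldsymbol{\Sigma}^y_{k+1}=\sum\omega_i\mathbf{q}^*_i\mathbf{q}^{*T}_i-\hat{\mathbf{y}}\hat{\mathbf{y}}^T+\mathbf{R}_{k+1}$, $\boldsymbol{\Sigma}^{xy}_{k+1}=\sum\omega_i\mathbf{q}_i\mathbf{q}^{*T}_i-\hat{\mathbf{x}}_{k+1|k}\hat{\mathbf{y}}^T$, $\mathbf{K}_{k+1}=\boldsymbol{\Sigma}^{xy}(\boldsymbol{\Sigma}^y)^{-1}$, $\hat{\mathbf{x}}_{k+1}=\hat{\mathbf{x}}_{k+1|k}+\mathbf{K}_{k+1}(\mathbf{y}_{k+1}-\hat{\mathbf{y}}_{k+1|k})$,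 $\boldsymbol{\Sigma}_{k+1}=\boldsymbol{\Sigma}_{k+1|k}-\mathbf{K}\boldsymbol{\Sigma}^y\mathbf{K}^T$. $\mathbf{F}_k=\frac{\partial f}{\partial\mathbf{x}}(\hat{\mathbf{x}}_k)$, $\mathbf{H}_{k+1}=\frac{\partial h}{\partial\mathbf{x}}(\hat{\mathbf{x}}_{k+1|k})$; unknown diagonal $\mathbf{U}^x_k,\mathbf{U}^y_k$ and matrices $\mathbf{U}^{xy}_k$ satisfy $\mathbf{x}_{k+1}-\hat{\mathbf{x}}_{k+1|k}=\mathbf{U}^x_k\mathbf{F}_k(\mathbf{x}_k-\hat{\mathbf{x}}_k)+\mathbf{w}_k$, $\mathbf{y}_{k+1}-\hat{\mathbf{y}}_{k+1|k}=\mathbf{U}^y_{k+1}\mathbf{H}_{k+1}(\mathbf{x}_{k+1}-\hat{\mathbf{x}}_{k+1|k})+\mathbf{v}_{k+1}$, $\boldsymbol{\Sigma}^{xy}_{k+1}=\boldsymbol{\Sigma}_{k+1|k}\mathbf{U}^{xy}_{k+1}\mathbf{H}_{k+1}^T\mathbf{U}^y_{k+1}$ (if $n_x\ge n_y$, else $\boldsymbol{\Sigma}_{k+1|k}\mathbf{H}_{k+1}^T\mathbf{U}^y_{k+1}\mathbf{U}^{xy}_{k+1}$); $\hat{\mathbf{Q}}_k,\hat{\mathbf{R}}_{k+1}$ defined by $\boldsymbol{\Sigma}_{k+1|k}=\mathbf{U}^x_k\mathbf{F}_k(\mathbf{I}-\mathbf{K}_k\mathbf{U}^y_k\mathbf{H}_k)\boldsymbol{\Sigma}_{k|k-1}(\cdot)^T\mathbf{F}_k^T\mathbf{U}^x_k+\hat{\mathbf{Q}}_k$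 (with $(\cdot)=\mathbf{I}-\mathbf{K}_k\mathbf{U}^y_k\mathbf{H}_k$) and $\boldsymbol{\Sigma}^y_{k+1}=\mathbf{U}^y_{k+1}\mathbf{H}_{k+1}\boldsymbol{\Sigma}_{k+1|k}\mathbf{H}_{k+1}^T\mathbf{U}^y_{k+1}+\hat{\mathbf{R}}_{k+1}$. I-UKF: the defender's filter estimating $\hat{\mathbf{x}}_k$ from $\mathbf{a}_k$ and $\mathbf{x}_k$, with state transition $\hat{\mathbf{x}}_{k+1}=\widetilde f(\hat{\mathbf{x}}_k,\boldsymbol{\Sigma}_k,\mathbf{x}_{k+1},\mathbf{v}_{k+1}):=\sum_i\omega_i(\mathbf{s}^*_{i,k+1|k}-\mathbf{K}_{k+1}\mathbf{q}^*_{i,k+1|k})+\mathbf{K}_{k+1}h(\mathbf{x}_{k+1})+\mathbf{K}_{k+1}\mathbf{v}_{k+1}$ and observation $\mathbf{a}_k$; it produces $\hat{\hat{\mathbf{x}}}_k$, $\hat{\hat{\mathbf{x}}}_{k|k-1}$, $\overline{\boldsymbol{\Sigma}}_{k|k-1}$, with $\widetilde{\mathbf{F}}_k=\frac{\partial\widetilde f(\mathbf{x},\boldsymbol{\Sigma}_k,\mathbf{x}_{k+1},\mathbf{0})}{\partial\mathbf{x}}|_{\mathbf{x}=\hat{\hat{\mathbf{x}}}_k}$, $\mathbf{G}_k=\frac{\partial g}{\partial\mathbf{x}}(\hat{\hat{\mathbf{x}}}_{k|k-1})$ and unknown matrices $\overline{\mathbf{U}}^a_k,\overline{\mathbf{U}}^{xa}_k$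 and $\hat{\overline{\mathbf{Q}}}_k,\hat{\overline{\mathbf{R}}}_k$ being the I-UKF counterparts of $\mathbf{U}^y,\mathbf{U}^{xy},\hat{\mathbf{Q}},\hat{\mathbf{R}}$. The hypotheses: (C1) positive reals with $\|\mathbf{F}_k\|\le\bar f$, $\|\mathbf{H}_k\|\le\bar h$, $\|\mathbf{U}^x_k\|\le\bar\alpha$, $\|\mathbf{U}^y_k\|\le\bar\beta$, $\|\mathbf{U}^{xy}_k\|\le\bar\gamma$, $\mathbf{Q}_k\preceq\bar q\mathbf{I}$, $\mathbf{R}_k\preceq\bar r\mathbf{I}$, $\hat q\mathbf{I}\preceq\hat{\mathbf{Q}}_k$, $\hat r\mathbf{I}\preceq\hat{\mathbf{R}}_k$, $\underline{\sigma}\mathbf{I}\preceq\boldsymbol{\Sigma}_{k|k-1}\preceq\bar\sigma\mathbf{I}$; (C2) $\mathbf{U}^x_k,\mathbf{F}_k$ non-singular; (C3) $\bar\sigma\bar\gamma\bar h^2\bar\beta^2<\hat r$; (C4) positive reals with $\|\mathbf{G}_k\|\le\bar g$, $\|\overline{\mathbf{U}}^a_k\|\le\bar c$, $\|\overline{\mathbf{U}}^{xa}_k\|\le\bar d$, $\overline{\mathbf{R}}_k\preceq\bar\epsilon\mathbf{I}$, $\hat c\mathbf{I}\preceq\hat{\overline{\mathbf{Q}}}_k$, $\hat d\mathbf{I}\preceq\hat{\overline{\mathbf{R}}}_k$, $\underline{p}\mathbf{I}\preceq\overline{\boldsymbol{\Sigma}}_{k|k-1}\preceq\bar p\mathbf{I}$;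 (C5) $\boldsymbol{\Sigma}^y_k\succeq\underline{y}\mathbf{I}$ for a real constant $\underline{y}$; (C6) $\|f(\cdot)\|_2\le\delta_f$, $\|h(\cdot)\|_2\le\delta_h$; (C7) $\widetilde{\mathbf{F}}_k$ non-singular with $\|\widetilde{\mathbf{F}}_k^{-1}\|\le\bar a$; (C8) $\bar p\bar d\bar g^2\bar c^2<\hat d$; all for every $k\ge0$. Standing assumptions: the I-UKF's approximation of $\boldsymbol{\Sigma}_k$ is exact, the forward gain computed at the I-UKF estimate equals that at $\hat{\mathbf{x}}_k$, and $\|\frac{\partial f}{\partial\mathbf{x}}(\mathbf{x})\|\le\bar f$, $\|\frac{\partial h}{\partial\mathbf{x}}(\mathbf{x})\|\le\bar h$ at every point where they are evaluated, in particular every sigma point. *)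

theory Defs
  imports "HOL-Analysis.Analysis"
begin

definition mnorm :: "real^'n^'m \<Rightarrow> real" where
  "mnorm A = onorm (\<lambda>v. A *v v)"

definition loewner_le :: "real^'n^'n \<Rightarrow> real^'n^'n \<Rightarrow> bool" where
  "loewner_le A B \<longleftrightarrow> (\<forall>v. v \<bullet> (A *v v) \<le> v \<bullet> (B *v v))"

definition diag_mat :: "real^'n^'n \<Rightarrow> bool" where
  "diag_mat A \<longleftrightarrow> (\<forall>i j. i \<noteq> j \<longrightarrow> A $ i $ j = 0)"

definition lower_tri :: "real^('n::{finite,linorder})^('n::{finite,linorder}) \<Rightarrow> bool" where
  "lower_tri L \<longleftrightarrow> (\<forall>i j. i < j \<longrightarrow> L $ i $ j = 0)"

definition chol :: "real^('n::{finite,linorder})^('n::{finite,linorder}) \<Rightarrow> real^('n::{finite,linorder})^('n::{finite,linorder})" where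
  "chol A = (THE L. lower_tri L \<and> (\<forall>i. 0 < L $ i $ i) \<and> L ** transpose L = A)"

definition idx :: "nat \<Rightarrow> ('n::{finite,linorder})" where
  "idx j = sorted_list_of_set (UNIV :: 'n set) ! j"

definition outer :: "real^'a \<Rightarrow> real^'b \<Rightarrow> real^'b^'a" where
  "outer u v = (\<chi> i j. u $ i * v $ j)"

definition sigma_pt :: "real \<Rightarrow> real^('n::{finite,linorder}) \<Rightarrow> real^('n::{finite,linorder})^('n::{finite,linorder}) \<Rightarrow> nat \<Rightarrow> real^('n::{finite,linorder})" where
  "sigma_pt \<kappa> x S i =
     (let L = chol ((real CARD('n) + \<kappa>) *\<^sub>R S); n = CARD('n) in
      if i = 0 then x
      else if i \<le> n then x + column (idx (i - 1)) L
      else x - column (idx (i - n - 1)) L)"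

definition sigma_wt :: "nat \<Rightarrow> real \<Rightarrow> nat \<Rightarrow> real" where
  "sigma_wt n \<kappa> i = (if i = 0 then \<kappa> / (real n + \<kappa>) else 1 / (2 * (real n + \<kappa>)))"

definition ut_mean :: "real \<Rightarrow> (real^('n::{finite,linorder}) \<Rightarrow> real^'m) \<Rightarrow> real^('n::{finite,linorder}) \<Rightarrow> real^('n::{finite,linorder})^('n::{finite,linorder}) \<Rightarrow> real^'m" where
  "ut_mean \<kappa> \<phi> x S = (\<Sum>i\<le>2 * CARD('n). sigma_wt CARD('n) \<kappa> i *\<^sub>R \<phi> (sigma_pt \<kappa> x S i))"

definition ut_cov :: "real \<Rightarrow> (real^('n::{finite,linorder}) \<Rightarrow> real^'m) \<Rightarrow> real^('n::{finite,linorder}) \<Rightarrow> real^('n::{finite,linorder})^('n::{finite,linorder}) \<Rightarrow> real^'m^'m" where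
  "ut_cov \<kappa> \<phi> x S =
     (\<Sum>i\<le>2 * CARD('n). sigma_wt CARD('n) \<kappa> i *\<^sub>R outer (\<phi> (sigma_pt \<kappa> x S i)) (\<phi> (sigma_pt \<kappa> x S i)))
     - outer (ut_mean \<kappa> \<phi> x S) (ut_mean \<kappa> \<phi> x S)"

definition ut_cross :: "real \<Rightarrow> (real^('n::{finite,linorder}) \<Rightarrow> real^'m) \<Rightarrow> real^('n::{finite,linorder}) \<Rightarrow> real^('n::{finite,linorder})^('n::{finite,linorder}) \<Rightarrow> real^'m^('n::{finite,linorder})" where
  "ut_cross \<kappa> \<phi> x S =
     (\<Sum>i\<le>2 * CARD('n). sigma_wt CARD('n) \<kappa> i *\<^sub>R outer (sigma_pt \<kappa> x S i) (\<phi> (sigma_pt \<kappa> x S i)))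
     - outer x (ut_mean \<kappa> \<phi> x S)"

text \<open>I-UKF state transition  f~(z, Sigma_k, x_{k+1}, 0), with the forward gain K_{k+1}
  (the one computed at the forward estimate) and Sigma_k, Q_k given.\<close>
definition itrans :: "real \<Rightarrow> (real^('n::{finite,linorder}) \<Rightarrow> real^('n::{finite,linorder})) \<Rightarrow> (real^('n::{finite,linorder}) \<Rightarrow> real^'m)
    \<Rightarrow> real^('n::{finite,linorder})^('n::{finite,linorder}) \<Rightarrow> real^('n::{finite,linorder})^('n::{finite,linorder}) \<Rightarrow> real^'m^('n::{finite,linorder}) \<Rightarrow> real^('n::{finite,linorder}) \<Rightarrow> real^('n::{finite,linorder}) \<Rightarrow> real^('n::{finite,linorder})" where
  "itrans \<kappa> f h Qk Sk Kk1 xk1 z =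
     (\<Sum>i\<le>2 * CARD('n). sigma_wt CARD('n) \<kappa> i *\<^sub>R
        (f (sigma_pt \<kappa> z Sk i)
         - Kk1 *v h (sigma_pt \<kappa> (ut_mean \<kappa> f z Sk) (ut_cov \<kappa> f z Sk + Qk) i)))
     + Kk1 *v h xk1"

end

theory Submission
  imports Defs
begin


lemma lin_induct:
  fixes P :: "'n::{finite,linorder} \<Rightarrow> bool"
  assumes step: "\<And>j. (\<And>k. k < j \<Longrightarrow> P k) \<Longrightarrow> P j"
  shows "P j"
proof (induction "card {k::'n. k < j}" arbitrary: j rule: less_induct)
  case less
  show ?case
  proof (rule step)
    fix k assume kj: "k < j"
    then have "{k'. k' < k} \<subset> {k'. k' < j}" by auto
    then have "card {k'. k' < k} < card {k'. k' < j}" by (simp add: psubset_card_mono)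
    then show "P k" using less by blast
  qed
qed

lemma sum_single_nz:
  fixes F :: "'n::finite \<Rightarrow> real"
  assumes "\<And>k. k \<noteq> j \<Longrightarrow> F k = 0"
  shows "(\<Sum>k\<in>UNIV. F k) = F j"
proof -
  have "(\<Sum>k\<in>UNIV. F k) = F j + (\<Sum>k\<in>UNIV-{j}. F k)" by (simp add: sum.remove)
  also have "(\<Sum>k\<in>UNIV-{j}. F k) = 0" using assms by (intro sum.neutral) auto
  finally show ?thesis by simp
qed

lemma tr_zero[simp]: "transpose 0 = 0"
  by (simp add: transpose_def vec_eq_iff)

lemma tr_entry[simp]: "transpose A $ i $ j = A $ j $ i"
  by (simp add: transpose_def)

lemma mmult_entry: "(A ** B) $ i $ j = (\<Sum>k\<in>UNIV. A$i$k * B$k$j)"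
  by (simp add: matrix_matrix_mult_def)

lemma chol_unique:
  fixes L1 L2 :: "real^('n::{finite,linorder})^('n::{finite,linorder})"
  assumes l1: "lower_tri L1" and l2: "lower_tri L2" and p1: "\<forall>i. 0 < L1$i$i" and p2: "\<forall>i. 0 < L2$i$i"
    and eq: "L1 ** transpose L1 = L2 ** transpose L2"
  shows "L1 = L2"
proof -
  have col: "\<forall>i. L1$i$j = L2$i$j" for j
  proof (induction j rule: lin_induct)
    case (1 j)
    have key: "L1$i$j * L1$j$j - L2$i$j * L2$j$j = 0" for i
    proof -
      have "(\<Sum>k\<in>UNIV. L1$i$k * L1$j$k - L2$i$k * L2$j$k) = 0"
        using arg_cong[OF eq, of "\<lambda>M. M$i$j"] by (simp add: mmult_entry sum_subtractf)
      moreover have "(\<Sum>k\<in>UNIV. L1$i$k * L1$j$k - L2$i$k * L2$j$k) = L1$i$j * L1$j$j - L2$i$j * L2$j$j"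
      proof (rule sum_single_nz)
        fix k assume "k \<noteq> j"
        then consider "k < j" | "j < k" by fastforce
        then show "L1$i$k * L1$j$k - L2$i$k * L2$j$k = 0"
        proof cases
          case 1 then show ?thesis using "1.IH" by simp
        next
          case 2 then show ?thesis using l1 l2 by (simp add: lower_tri_def)
        qed
      qed
      ultimately show ?thesis by simp
    qed
    have djj: "L1$j$j = L2$j$j"
    proof -
      have "(L1$j$j)^2 = (L2$j$j)^2" using key[of j] by (simp add: power2_eq_square)
      then show ?thesis using p1 p2 by (meson less_le power2_eq_iff_nonneg)
    qed
    show ?case
    proof
      fix i
      show "L1$i$j = L2$i$j"
      proof (cases "i < j")
        case True then show ?thesis using l1 l2 by (simp add: lower_tri_def)
      next
        case False
        have "(L1$i$j - L2$i$j) * L2$j$j = 0" using key[of i] djj by (simp add: algebra_simps)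
        then show ?thesis using p2 by (metis eq_iff_diff_eq_0 less_irrefl mult_eq_0_iff)
      qed
    qed
  qed
  show ?thesis using col by (simp add: vec_eq_iff)
qed

lemma permutes_lin_gt:
  fixes p :: "'n::{finite,linorder} \<Rightarrow> 'n"
  assumes p: "p permutes UNIV" and nid: "p \<noteq> id"
  shows "\<exists>i. i < p i"
proof (rule ccontr)
  assume "\<not> ?thesis"
  then have le: "\<And>i. p i \<le> i" by (simp add: not_less)
  let ?D = "{i. p i \<noteq> i}"
  have "?D \<noteq> {}" using nid by (auto simp: fun_eq_iff)
  then have mD: "Min ?D \<in> ?D" by (intro Min_in) auto
  have mmin: "\<And>i. i \<in> ?D \<Longrightarrow> Min ?D \<le> i" by (intro Min_le) auto
  define m where "m = Min ?D"
  have "p m < m" using mD le[of m] unfolding m_def by (simp add: order.strict_iff_order)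
  then have "p m \<notin> ?D" using mmin unfolding m_def by (meson leD)
  then have "p (p m) = p m" by simp
  moreover have "inj p" using p by (simp add: permutes_inj)
  ultimately have "p m = m" by (simp add: inj_eq)
  then show False using mD unfolding m_def by simp
qed

lemma det_lower_lin:
  fixes A :: "real^('n::{finite,linorder})^('n::{finite,linorder})"
  assumes ld: "\<And>i j. i < j \<Longrightarrow> A$i$j = 0"
  shows "det A = prod (\<lambda>i. A$i$i) (UNIV:: 'n set)"
proof -
  let ?U = "UNIV:: 'n set"
  let ?PU = "{p. p permutes ?U}"
  let ?pp = "\<lambda>p. of_int (sign p) * prod (\<lambda>i. A$i$p i) (UNIV :: 'n set)"
  have fU: "finite ?U"
    by simp
  have id0: "{id} \<subseteq> ?PU"
    by (auto simp: permutes_id)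
  have p0: "\<forall>p \<in> ?PU - {id}. ?pp p = 0"
  proof
    fix p
    assume "p \<in> ?PU - {id}"
    then obtain i where i: "i < p i"
      using permutes_lin_gt by blast
    from ld[OF i] have "\<exists>i \<in> ?U. A$i$p i = 0"
      by blast
    with prod_zero[OF fU] show "?pp p = 0"
      by force
  qed
  from sum.mono_neutral_cong_left[OF finite_permutations[OF fU] id0 p0] show ?thesis
    unfolding det_def by (simp add: sign_id)
qed


definition lowp :: "real^('n::{finite,linorder})^('n::{finite,linorder}) \<Rightarrow> real^('n::{finite,linorder})^('n::{finite,linorder})" where
  "lowp M = (\<chi> i j. if j \<le> i then M$i$j else 0)"
definition upp :: "real^('n::{finite,linorder})^('n::{finite,linorder}) \<Rightarrow> real^('n::{finite,linorder})^('n::{finite,linorder})" where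
  "upp M = (\<chi> i j. if i < j then M$i$j else 0)"
definition Psi :: "real^('n::{finite,linorder})^('n::{finite,linorder}) \<Rightarrow> real^('n::{finite,linorder})^('n::{finite,linorder})" where
  "Psi M = lowp M ** transpose (lowp M) + (upp M - transpose (upp M))"
definition dPsi :: "real^('n::{finite,linorder})^('n::{finite,linorder}) \<Rightarrow> real^('n::{finite,linorder})^('n::{finite,linorder}) \<Rightarrow> real^('n::{finite,linorder})^('n::{finite,linorder})" where
  "dPsi L X = lowp X ** transpose (lowp L) + lowp L ** transpose (lowp X) + (upp X - transpose (upp X))"

lemma lowp_entry[simp]: "lowp M $ i $ j = (if j \<le> i then M$i$j else 0)"
  by (simp add: lowp_def)
lemma upp_entry[simp]: "upp M $ i $ j = (if i < j then M$i$j else 0)"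
  by (simp add: upp_def)
lemma lowp_upp: "lowp M + upp M = M"
  apply (simp add: vec_eq_iff not_le)
  using leD by blast
lemma lower_lowp: "lower_tri (lowp M)"
  using leD by (simp add: lower_tri_def) blast
lemma lowp_lower: "lower_tri L \<Longrightarrow> lowp L = L"
  by (auto simp: vec_eq_iff lower_tri_def)
lemma upp_lower: "lower_tri L \<Longrightarrow> upp L = 0"
  by (auto simp: vec_eq_iff lower_tri_def)

lemma linear_lowp: "linear lowp"
  by (rule linearI) (auto simp: vec_eq_iff)
lemma linear_upp: "linear upp"
  by (rule linearI) (auto simp: vec_eq_iff)
lemma linear_transp: "linear transpose"
  by (rule linearI) (auto simp: vec_eq_iff)

lemma linear_mmult_left: "linear (\<lambda>B. (A::real^'n^'m) ** (B::real^'p^'n))"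
proof (rule linearI)
  show "A ** (B + C) = A ** B + A ** C" for B C :: "real^'p^'n" by (rule matrix_add_ldistrib)
  show "A ** (c *\<^sub>R B) = c *\<^sub>R (A ** B)" for c and B :: "real^'p^'n"
    by (simp add: vec_eq_iff mmult_entry sum_distrib_left mult.left_commute)
qed
lemma linear_mmult_right: "linear (\<lambda>A. (A::real^'n^'m) ** (B::real^'p^'n))"
proof (rule linearI)
  show "(A + C) ** B = A ** B + C ** B" for A C :: "real^'n^'m"
    by (simp add: vec_eq_iff mmult_entry sum.distrib distrib_right)
  show "(c *\<^sub>R A) ** B = c *\<^sub>R (A ** B)" for c and A :: "real^'n^'m"
    by (simp add: vec_eq_iff mmult_entry sum_distrib_left mult.assoc)
qed

lemma bb_mmult: "bounded_bilinear ((**) :: real^('n::finite)^('m::finite) \<Rightarrow> real^('p::finite)^'n \<Rightarrow> real^'p^'m)"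
proof -
  have "bilinear ((**) :: real^('n::finite)^('m::finite) \<Rightarrow> real^('p::finite)^'n \<Rightarrow> real^'p^'m)"
    unfolding bilinear_def using linear_mmult_left linear_mmult_right by blast
  then show ?thesis by (simp add: bilinear_conv_bounded_bilinear)
qed


lemma prod_sym_entry: "((A::real^'n::finite^'m::finite) ** transpose B) $ j $ i = (B ** transpose A) $ i $ j"
  by (simp add: mmult_entry mult.commute)

lemma bl_lowp: "bounded_linear (lowp :: real^('n::{finite,linorder})^('n::{finite,linorder}) \<Rightarrow> _)"
  using linear_lowp linear_conv_bounded_linear by blast
lemma bl_upp: "bounded_linear (upp :: real^('n::{finite,linorder})^('n::{finite,linorder}) \<Rightarrow> _)"
  using linear_upp linear_conv_bounded_linear by blast
lemma bl_transp: "bounded_linear (transpose :: real^('n::finite)^('m::finite) \<Rightarrow> _)"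
  using linear_transp linear_conv_bounded_linear by blast

lemma Psi_deriv:
  fixes L :: "real^('n::{finite,linorder})^('n::{finite,linorder})"
  shows "(Psi has_derivative dPsi L) (at L)"
proof -
  have d1: "(lowp has_derivative lowp) (at L)" using bl_lowp by (rule bounded_linear_imp_has_derivative)
  have d2: "((\<lambda>M. transpose (lowp M)) has_derivative (\<lambda>M. transpose (lowp M))) (at L)"
    by (rule bounded_linear.has_derivative[OF bl_transp d1])
  have d3: "(upp has_derivative upp) (at L)" using bl_upp by (rule bounded_linear_imp_has_derivative)
  have d4: "((\<lambda>M. transpose (upp M)) has_derivative (\<lambda>M. transpose (upp M))) (at L)"
    by (rule bounded_linear.has_derivative[OF bl_transp d3])
  have "((\<lambda>M. lowp M ** transpose (lowp M)) has_derivative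
      (\<lambda>X. lowp L ** transpose (lowp X) + lowp X ** transpose (lowp L))) (at L)"
    using bounded_bilinear.FDERIV[OF bb_mmult d1 d2] .
  from has_derivative_add[OF this has_derivative_diff[OF d3 d4]] show ?thesis
    unfolding Psi_def dPsi_def by (simp add: algebra_simps)
qed

lemma Psi_cont: "continuous_on S Psi"
proof (rule has_derivative_continuous_on)
  fix x assume "x \<in> S"
  show "(Psi has_derivative dPsi x) (at x within S)"
    by (rule has_derivative_at_withinI[OF Psi_deriv])
qed

lemma Psi_antisym: "i < j \<Longrightarrow> Psi M $ i $ j - Psi M $ j $ i = 2 * M $ i $ j"
  unfolding Psi_def using prod_sym_entry[of "lowp M" "lowp M" j i] by simp

lemma dPsi_antisym: "i < j \<Longrightarrow> dPsi L X $ i $ j - dPsi L X $ j $ i = 2 * X $ i $ j"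
  unfolding dPsi_def using prod_sym_entry[of "lowp X" "lowp L" j i] prod_sym_entry[of "lowp L" "lowp X" j i]
  by simp

lemma lower_sym_zero:
  fixes Y L :: "real^('n::{finite,linorder})^('n::{finite,linorder})"
  assumes lY: "lower_tri Y" and lL: "lower_tri L" and dL: "\<forall>i. L$i$i \<noteq> 0"
    and eq: "Y ** transpose L + L ** transpose Y = 0"
  shows "Y = 0"
proof -
  have col: "\<forall>i. Y$i$j = 0" for j
  proof (induction j rule: lin_induct)
    case (1 j)
    have key: "Y$i$j * L$j$j + L$i$j * Y$j$j = 0" for i
    proof -
      have "(\<Sum>k\<in>UNIV. Y$i$k * L$j$k + L$i$k * Y$j$k) = 0"
        using arg_cong[OF eq, of "\<lambda>M. M$i$j"] by (simp add: mmult_entry sum.distrib)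
      moreover have "(\<Sum>k\<in>UNIV. Y$i$k * L$j$k + L$i$k * Y$j$k) = Y$i$j * L$j$j + L$i$j * Y$j$j"
      proof (rule sum_single_nz)
        fix k assume "k \<noteq> j"
        then consider "k < j" | "j < k" by fastforce
        then show "Y$i$k * L$j$k + L$i$k * Y$j$k = 0"
        proof cases
          case 1 then show ?thesis using "1.IH" by simp
        next
          case 2 then show ?thesis using lY lL by (simp add: lower_tri_def)
        qed
      qed
      ultimately show ?thesis by simp
    qed
    have djj: "Y$j$j = 0" using key[of j] dL by simp
    show ?case
    proof
      fix i
      show "Y$i$j = 0"
      proof (cases "i < j")
        case True then show ?thesis using lY by (simp add: lower_tri_def)
      next
        case False
        then show ?thesis using key[of i] djj dL by simp
      qed
    qed
  qed
  show ?thesis using col by (simp add: vec_eq_iff)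
qed

lemma dPsi_inj:
  fixes L :: "real^('n::{finite,linorder})^('n::{finite,linorder})"
  assumes dL: "\<forall>i. L$i$i \<noteq> 0"
  shows "inj (dPsi L)"
proof -
  have lin: "linear (dPsi L)" using has_derivative_linear[OF Psi_deriv] .
  have "X = 0" if X: "dPsi L X = 0" for X
  proof -
    have u: "upp X = 0"
    proof -
      have "X$i$j = 0" if "i < j" for i j
        using dPsi_antisym[OF that, of L X] X by simp
      then show ?thesis by (simp add: vec_eq_iff)
    qed
    then have "lowp X ** transpose (lowp L) + lowp L ** transpose (lowp X) = 0"
      using X unfolding dPsi_def by (simp add: transpose_def vec_eq_iff)
    then have "lowp X = 0"
      by (intro lower_sym_zero[OF lower_lowp lower_lowp]) (use dL in auto)
    then show "X = 0" using u lowp_upp[of X] by simp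
  qed
  then show ?thesis using lin by (simp add: linear_inj_iff_eq_0)
qed

definition posS :: "(real^('n::{finite,linorder})^('n::{finite,linorder})) set" where
  "posS = {M. \<forall>i. 0 < M$i$i}"

lemma open_posS: "open (posS :: (real^('n::{finite,linorder})^('n::{finite,linorder})) set)"
proof -
  have "posS = (\<Inter>i\<in>UNIV. {M::real^('n::{finite,linorder})^('n::{finite,linorder}). 0 < M$i$i})"
    by (auto simp: posS_def)
  moreover have "open (\<Inter>i\<in>UNIV. {M::real^('n::{finite,linorder})^('n::{finite,linorder}). 0 < M$i$i})"
  proof (rule open_INT)
    show "\<forall>i\<in>UNIV. open {M::real^('n::{finite,linorder})^('n::{finite,linorder}). 0 < M$i$i}"
      by (intro ballI open_Collect_less continuous_intros)
  qed simp
  ultimately show ?thesis by simp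
qed

lemma Psi_lower: "lower_tri L \<Longrightarrow> Psi L = L ** transpose L"
  by (simp add: Psi_def lowp_lower upp_lower)

lemma Psi_sym:
  assumes "transpose (Psi M) = Psi M"
  shows "upp M = 0" "Psi M = lowp M ** transpose (lowp M)"
proof -
  have "M$i$j = 0" if "i < j" for i j
    using Psi_antisym[OF that, of M] arg_cong[OF assms, of "\<lambda>X. X$j$i"] by simp
  then show u: "upp M = 0" by (simp add: vec_eq_iff)
  then show "Psi M = lowp M ** transpose (lowp M)" by (simp add: Psi_def)
qed

lemma Psi_inj: "inj_on Psi posS"
proof
  fix M1 M2 :: "real^('n::{finite,linorder})^('n::{finite,linorder})"
  assume m1: "M1 \<in> posS" and m2: "M2 \<in> posS" and eq: "Psi M1 = Psi M2"
  have u: "upp M1 = upp M2"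
  proof -
    have "M1$i$j = M2$i$j" if "i < j" for i j
      using Psi_antisym[OF that, of M1] Psi_antisym[OF that, of M2] eq by simp
    then show ?thesis by (simp add: vec_eq_iff)
  qed
  then have "lowp M1 ** transpose (lowp M1) = lowp M2 ** transpose (lowp M2)"
    using eq by (simp add: Psi_def)
  then have "lowp M1 = lowp M2"
    using m1 m2 chol_unique[OF lower_lowp lower_lowp, of M1 M2] by (auto simp: posS_def)
  then show "M1 = M2" using u lowp_upp[of M1] lowp_upp[of M2] by metis
qed

lemma open_Psi_img: "open (Psi ` (posS :: (real^('n::{finite,linorder})^('n::{finite,linorder})) set))"
  by (rule invariance_of_domain[OF Psi_cont open_posS Psi_inj])

lemma chol_char:
  fixes L :: "real^('n::{finite,linorder})^('n::{finite,linorder})"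
  assumes "lower_tri L" "\<forall>i. 0 < L$i$i" "L ** transpose L = A"
  shows "chol A = L"
  unfolding chol_def
proof (rule the_equality)
  show "lower_tri L \<and> (\<forall>i. 0 < L $ i $ i) \<and> L ** transpose L = A" using assms by blast
  fix L' assume "lower_tri L' \<and> (\<forall>i. 0 < L' $ i $ i) \<and> L' ** transpose L' = A"
  then show "L' = L" using assms chol_unique[of L' L] by auto
qed

lemma diag_pos_of_pd:
  fixes L :: "real^('n::{finite,linorder})^('n::{finite,linorder})"
  assumes lL: "lower_tri L" and nn: "\<forall>i. 0 \<le> L$i$i"
    and pd: "\<forall>v. v \<noteq> 0 \<longrightarrow> 0 < v \<bullet> ((L ** transpose L) *v v)"
  shows "\<forall>i. 0 < L$i$i"
proof -
  have "\<forall>x. (L ** transpose L) *v x = 0 \<longrightarrow> x = 0"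
    using pd by (metis inner_zero_right less_irrefl)
  then have "inj ((*v) (L ** transpose L))"
    by (simp add: linear_inj_iff_eq_0)
  then have "det (L ** transpose L) \<noteq> 0"
    using det_nz_iff_inj[of "(*v) (L ** transpose L)"] by simp
  then have "det L \<noteq> 0" by (simp add: det_mul)
  moreover have "det L = prod (\<lambda>i. L$i$i) UNIV"
    by (rule det_lower_lin) (use lL in \<open>simp add: lower_tri_def\<close>)
  ultimately have "L$i$i \<noteq> 0" for i by auto
  then show ?thesis using nn by (simp add: order.strict_iff_order)
qed

lemma norm_sq_trace: "(norm (L::real^('n::finite)^('m::finite)))^2 = (\<Sum>i\<in>UNIV. (L ** transpose L)$i$i)"
  by (simp add: power2_norm_eq_inner inner_vec_def mmult_entry)

lemma mat_entry: "mat k $ i $ j = (if i = j then k else 0)"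
  by (simp add: mat_def)

lemma chol_exists:
  fixes A :: "real^('n::{finite,linorder})^('n::{finite,linorder})"
  assumes sym: "transpose A = A" and lam: "0 < lam" and pd: "\<forall>v. lam * (v \<bullet> v) \<le> v \<bullet> (A *v v)"
  shows "\<exists>L. lower_tri L \<and> (\<forall>i. 0 < L$i$i) \<and> L ** transpose L = A"
proof -
  define At where "At t = (1 - t) *\<^sub>R mat 1 + t *\<^sub>R A" for t :: real
  define T where "T = {t. \<exists>L. lower_tri L \<and> (\<forall>i. 0 < L$i$i) \<and> L ** transpose L = At t}"
  have symA: "A$j$i = A$i$j" for i j using arg_cong[OF sym, of "\<lambda>X. X$i$j"] by simp
  have symAt: "transpose (At t) = At t" for t
    using symA by (simp add: At_def vec_eq_iff mat_entry)
  have pdAt: "0 < v \<bullet> (At t *v v)" if t: "0 \<le> t" "t \<le> 1" and v: "v \<noteq> 0" for t v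
  proof -
    have "At t *v v = ((1-t) *\<^sub>R mat 1) *v v + (t *\<^sub>R A) *v v"
      by (simp add: At_def matrix_vector_mult_add_rdistrib)
    also have "\<dots> = (1-t) *\<^sub>R v + t *\<^sub>R (A *v v)"
      by (metis scaleR_matrix_vector_assoc matrix_vector_mul_lid)
    finally have "At t *v v = (1-t) *\<^sub>R v + t *\<^sub>R (A *v v)" .
    then have e: "v \<bullet> (At t *v v) = (1-t) * (v \<bullet> v) + t * (v \<bullet> (A *v v))"
      by (simp add: inner_add_right)
    have vv: "0 < v \<bullet> v" using v by simp
    have "t * (lam * (v \<bullet> v)) \<le> t * (v \<bullet> (A *v v))" using pd t by (simp add: mult_left_mono)
    moreover have "0 < (1-t) * (v \<bullet> v) + t * (lam * (v \<bullet> v))"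
    proof (cases "t = 0")
      case True then show ?thesis using vv by simp
    next
      case False then have "0 < t" using t by simp
      then have "0 < t * (lam * (v \<bullet> v))" using lam vv by simp
      moreover have "0 \<le> (1-t) * (v \<bullet> v)" using t vv by simp
      ultimately show ?thesis by linarith
    qed
    ultimately show ?thesis using e by linarith
  qed
  have TO: "T = At -` (Psi ` posS)"
  proof
    show "T \<subseteq> At -` (Psi ` posS)"
    proof
      fix t assume "t \<in> T"
      then obtain L where L: "lower_tri L" "\<forall>i. 0 < L$i$i" "L ** transpose L = At t" unfolding T_def by blast
      have "At t = Psi L" using Psi_lower[OF L(1)] L(3) by simp
      moreover have "L \<in> posS" using L(2) unfolding posS_def by blast
      ultimately show "t \<in> At -` (Psi ` posS)" by blast
    qed
    show "At -` (Psi ` posS) \<subseteq> T"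
    proof
      fix t assume "t \<in> At -` (Psi ` posS)"
      then obtain M where M: "M \<in> posS" "At t = Psi M" by blast
      then have "transpose (Psi M) = Psi M" using symAt[of t] by simp
      then have "Psi M = lowp M ** transpose (lowp M)" by (rule Psi_sym)
      moreover have "\<forall>i. 0 < lowp M $i$i" using M(1) by (simp add: posS_def)
      ultimately have "lower_tri (lowp M) \<and> (\<forall>i. 0 < lowp M $i$i) \<and> lowp M ** transpose (lowp M) = At t"
        using M(2) lower_lowp by simp
      then show "t \<in> T" unfolding T_def by blast
    qed
  qed
  have contAt: "continuous (at x) At" for x
    unfolding At_def by (intro continuous_intros)
  have openT: "open T"
    unfolding TO by (rule continuous_open_vimage[OF open_Psi_img contAt])
  define R where "R = sqrt (real CARD('n) + (\<Sum>i\<in>UNIV. \<bar>A$i$i\<bar>))"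
  define K where "K = {L::real^('n::{finite,linorder})^('n::{finite,linorder}). (\<forall>i j. i < j \<longrightarrow> L$i$j = 0)} \<inter> {L. \<forall>i. 0 \<le> L$i$i} \<inter> cball 0 R"
  have closedK: "closed K"
  proof -
    have "closed {L::real^('n::{finite,linorder})^('n::{finite,linorder}). (\<forall>i j. i < j \<longrightarrow> L$i$j = 0)}"
    proof (intro closed_Collect_all)
      fix i j :: 'n
      show "closed {L::real^('n::{finite,linorder})^('n::{finite,linorder}). i < j \<longrightarrow> L$i$j = 0}"
      proof (cases "i < j")
        case True
        have "closed {L::real^('n::{finite,linorder})^('n::{finite,linorder}). L$i$j = 0}"
          by (intro closed_Collect_eq continuous_intros)
        then show ?thesis using True by simp
      next
        case False then show ?thesis by simp
      qed
    qed
    moreover have "closed {L::real^('n::{finite,linorder})^('n::{finite,linorder}). \<forall>i. 0 \<le> L$i$i}"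
      by (intro closed_Collect_all closed_Collect_le continuous_intros)
    ultimately show ?thesis unfolding K_def by (intro closed_Int closed_cball)
  qed
  have compactK: "compact K"
  proof -
    have "bounded K" unfolding K_def by (rule bounded_subset[OF bounded_cball]) auto
    then show ?thesis using closedK by (simp add: compact_eq_bounded_closed)
  qed
  define W where "W = ({0..1} \<times> K) \<inter> {p. snd p ** transpose (snd p) = At (fst p)}"
  have closedEq: "closed {p::real \<times> (real^('n::{finite,linorder})^('n::{finite,linorder})). snd p ** transpose (snd p) = At (fst p)}"
  proof (rule closed_Collect_eq)
    have c1: "continuous_on UNIV (\<lambda>p::real \<times> (real^('n::{finite,linorder})^('n::{finite,linorder})). snd p)"
      by (intro continuous_intros)
    have c2: "continuous_on UNIV (\<lambda>p::real \<times> (real^('n::{finite,linorder})^('n::{finite,linorder})). transpose (snd p))"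
      by (rule continuous_on_compose2[OF linear_continuous_on[OF bl_transp] c1]) auto
    show "continuous_on UNIV (\<lambda>p::real \<times> (real^('n::{finite,linorder})^('n::{finite,linorder})). snd p ** transpose (snd p))"
      by (rule bounded_bilinear.continuous_on[OF bb_mmult c1 c2])
    show "continuous_on UNIV (\<lambda>p::real \<times> (real^('n::{finite,linorder})^('n::{finite,linorder})). At (fst p))"
      unfolding At_def by (intro continuous_intros)
  qed
  have compactW: "compact W"
    unfolding W_def by (intro compact_Int_closed compact_Times compact_Icc compactK closedEq)
  have closedC: "closed (fst ` W)"
  proof (rule compact_imp_closed)
    have "continuous_on W fst" by (rule continuous_on_fst[OF continuous_on_id])
    then show "compact (fst ` W)" by (rule compact_continuous_image[OF _ compactW])
  qed
  have TC: "t \<in> T \<longleftrightarrow> t \<in> fst ` W" if t: "0 \<le> t" "t \<le> 1" for t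
  proof
    assume "t \<in> T"
    then obtain L where L: "lower_tri L" "\<forall>i. 0 < L$i$i" "L ** transpose L = At t" by (auto simp: T_def)
    have "(norm L)^2 = (\<Sum>i\<in>UNIV. At t $i$i)" using L(3) norm_sq_trace[of L] by simp
    also have "\<dots> \<le> (\<Sum>i\<in>UNIV. 1 + \<bar>A$i$i\<bar>)"
    proof (rule sum_mono)
      fix i
      have "At t $i$i = (1-t) + t * A$i$i" by (simp add: At_def mat_entry)
      also have "\<dots> \<le> (1 - t) + t * \<bar>A$i$i\<bar>" using t by (simp add: mult_left_mono)
      also have "\<dots> \<le> 1 + \<bar>A$i$i\<bar>"
      proof -
        have "t * \<bar>A$i$i\<bar> \<le> 1 * \<bar>A$i$i\<bar>" using t by (intro mult_right_mono) auto
        then show ?thesis using t by simp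
      qed
      finally show "At t $i$i \<le> 1 + \<bar>A$i$i\<bar>" .
    qed
    also have "\<dots> = real CARD('n) + (\<Sum>i\<in>UNIV. \<bar>A$i$i\<bar>)" by (simp add: sum.distrib)
    finally have "norm L \<le> R" unfolding R_def by (rule real_le_rsqrt)
    then have "L \<in> K" using L unfolding K_def lower_tri_def by (auto simp: less_imp_le)
    then have "(t, L) \<in> W" using L t unfolding W_def by auto
    then show "t \<in> fst ` W" by force
  next
    assume "t \<in> fst ` W"
    then obtain L where L: "(t, L) \<in> W" by force
    then have l: "lower_tri L" "\<forall>i. 0 \<le> L$i$i" "L ** transpose L = At t"
      unfolding W_def K_def lower_tri_def by auto
    have "\<forall>i. 0 < L$i$i"
      by (rule diag_pos_of_pd[OF l(1) l(2)]) (use l(3) pdAt t in auto)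
    then show "t \<in> T" using l unfolding T_def by blast
  qed
  have "0 \<in> T"
  proof -
    have l1: "lower_tri (mat 1 :: real^('n::{finite,linorder})^('n::{finite,linorder}))"
      by (simp add: lower_tri_def mat_entry)
    have A0: "At 0 = mat 1" by (simp add: At_def)
    have "lower_tri (mat 1 :: real^('n::{finite,linorder})^('n::{finite,linorder})) \<and> (\<forall>i. 0 < (mat 1 :: real^('n::{finite,linorder})^('n::{finite,linorder}))$i$i)
       \<and> mat 1 ** transpose (mat 1) = At 0"
      using l1 A0 by (simp add: mat_entry transpose_mat)
    then show ?thesis unfolding T_def by blast
  qed
  have "T \<inter> {0..1} = {} \<or> - fst ` W \<inter> {0..1} = {}"
  proof (rule connectedD[OF connected_Icc openT open_Compl[OF closedC]])
    show "T \<inter> - fst ` W \<inter> {0..1} = {}"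
    proof (rule equals0I)
      fix t assume t: "t \<in> T \<inter> - fst ` W \<inter> {0..1}"
      then have "t \<in> T" "t \<notin> fst ` W" "0 \<le> t" "t \<le> 1" by auto
      then show False using TC[of t] by blast
    qed
    show "{0..1} \<subseteq> T \<union> - fst ` W"
    proof
      fix t assume "t \<in> {0..(1::real)}"
      then have "0 \<le> t" "t \<le> 1" by auto
      then show "t \<in> T \<union> - fst ` W" using TC[of t] by blast
    qed
  qed
  then have "- fst ` W \<inter> {0..1} = {}" using \<open>0 \<in> T\<close> by auto
  then have "1 \<in> fst ` W" by auto
  then have "1 \<in> T" using TC[of 1] by simp
  moreover have "At 1 = A" by (simp add: At_def)
  ultimately show ?thesis unfolding T_def by auto
qed

lemma mv_norm: "norm ((A::real^('n::finite)^('m::finite)) *v x) \<le> norm A * norm x"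
proof -
  have "norm (A *v x) \<le> norm (\<chi> i. norm (A$i) * norm x)"
  proof (rule norm_le_componentwise_cart)
    fix i
    have "\<bar>A$i \<bullet> x\<bar> \<le> norm (A$i) * norm x" by (rule Cauchy_Schwarz_ineq2)
    then show "norm ((A *v x)$i) \<le> norm ((\<chi> i. norm (A$i) * norm x)$i)"
      by (simp add: matrix_vector_mul_component)
  qed
  also have "norm (\<chi> i. norm (A$i) * norm x) = norm (\<chi> i. norm (A$i)) * norm x"
  proof -
    have "(\<chi> i. norm (A$i) * norm x) = norm x *\<^sub>R (\<chi> i. norm (A$i))" by (simp add: vec_eq_iff)
    then show ?thesis by simp
  qed
  also have "norm (\<chi> i. norm (A$i)) = norm A" by (simp add: norm_vec_def)
  finally show ?thesis .
qed

lemma row_eq_tmul: "(A::real^('n::finite)^('m::finite)) $ i = transpose A *v axis i 1"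
  by (simp add: matrix_vector_mult_basis vec_eq_iff column_def)

lemma mm_row: "((A::real^('n::finite)^('m::finite)) ** (B::real^('p::finite)^'n)) $ i = transpose B *v (A $ i)"
  by (simp add: vec_eq_iff mmult_entry matrix_vector_mult_def mult.commute)

lemma norm_transpose: "norm (transpose (A::real^('n::finite)^('m::finite))) = norm A"
proof -
  have "(norm (transpose A))^2 = (norm A)^2"
    unfolding power2_norm_eq_inner inner_vec_def by (simp add: tr_entry) (rule sum.swap)
  then show ?thesis by (simp add: power2_eq_iff_nonneg)
qed

lemma mm_norm: "norm ((A::real^('n::finite)^('m::finite)) ** (B::real^('p::finite)^'n)) \<le> norm A * norm B"
proof -
  have "norm (A ** B) \<le> norm (\<chi> i. norm B * norm (A$i))"
  proof (rule norm_le_componentwise_cart)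
    fix i
    show "norm ((A ** B)$i) \<le> norm ((\<chi> i. norm B * norm (A$i))$i)"
      using mv_norm[of "transpose B" "A$i"] by (simp add: mm_row norm_transpose)
  qed
  also have "(\<chi> i. norm B * norm (A$i)) = norm B *\<^sub>R (\<chi> i. norm (A$i))" by (simp add: vec_eq_iff)
  also have "norm \<dots> = norm B * norm A"
  proof -
    have "norm (\<chi> i. norm (A$i)) = norm A" by (simp add: norm_vec_def)
    then show ?thesis by (simp only: norm_scaleR abs_norm_cancel)
  qed
  finally show ?thesis by (simp add: mult.commute)
qed

lemma inner_mv_transpose: "(x::real^('m::finite)) \<bullet> ((A::real^('n::finite)^'m) *v y) = (transpose A *v x) \<bullet> y"
  by (metis dot_lmul_matrix transpose_transpose vector_transpose_matrix)

lemma lower_inv: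
  fixes L N :: "real^('n::{finite,linorder})^('n::{finite,linorder})"
  assumes lL: "lower_tri L" and dL: "\<forall>i. L$i$i \<noteq> 0" and LN: "L ** N = mat 1"
  shows "lower_tri N"
proof -
  have row: "\<forall>j. i < j \<longrightarrow> N$i$j = 0" for i
  proof (induction i rule: lin_induct)
    case (1 i)
    show ?case
    proof (intro allI impI)
      fix j assume ij: "i < j"
      have "(\<Sum>k\<in>UNIV. L$i$k * N$k$j) = 0"
        using arg_cong[OF LN, of "\<lambda>M. M$i$j"] ij by (simp add: mmult_entry mat_entry)
      moreover have "(\<Sum>k\<in>UNIV. L$i$k * N$k$j) = L$i$i * N$i$j"
      proof (rule sum_single_nz)
        fix k assume "k \<noteq> i"
        then consider "k < i" | "i < k" by fastforce
        then show "L$i$k * N$k$j = 0"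
        proof cases
          case 1 then have "k < j" using ij by simp
          then show ?thesis using "1.IH"[OF \<open>k < i\<close>] by simp
        next
          case 2 then show ?thesis using lL by (simp add: lower_tri_def)
        qed
      qed
      ultimately show "N$i$j = 0" using dL by simp
    qed
  qed
  then show ?thesis by (simp add: lower_tri_def)
qed

lemma lower_mult: "lower_tri (A::real^('n::{finite,linorder})^('n::{finite,linorder})) \<Longrightarrow> lower_tri B \<Longrightarrow> lower_tri (A ** B)"
  unfolding lower_tri_def mmult_entry
proof (intro allI impI sum.neutral ballI)
  fix i j k :: 'n
  assume a: "\<forall>i j. i < j \<longrightarrow> A $ i $ j = 0" and b: "\<forall>i j. i < j \<longrightarrow> B $ i $ j = 0" and ij: "i < j"
  show "A$i$k * B$k$j = 0"
  proof (cases "i < k")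
    case True then show ?thesis using a by simp
  next
    case False then have "k < j" using ij by simp
    then show ?thesis using b by simp
  qed
qed

lemma lower_norm_sym: "lower_tri (Y::real^('n::{finite,linorder})^('n::{finite,linorder})) \<Longrightarrow> norm Y \<le> norm (Y + transpose Y)"
proof (rule norm_le_componentwise_cart)
  fix i assume lY: "lower_tri Y"
  show "norm (Y$i) \<le> norm ((Y + transpose Y)$i)"
  proof (rule norm_le_componentwise_cart)
    fix j
    show "norm (Y$i$j) \<le> norm ((Y + transpose Y)$i$j)"
    proof (cases i j rule: linorder_cases)
      case less then show ?thesis using lY by (simp add: lower_tri_def)
    next
      case equal then show ?thesis by simp
    next
      case greater then show ?thesis using lY by (simp add: lower_tri_def)
    qed
  qed
qed

lemma mm_radd: "((A::real^('n::finite)^('m::finite)) + C) ** (B::real^('p::finite)^'n) = A ** B + C ** B"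
  by (simp add: vec_eq_iff mmult_entry sum.distrib distrib_right)

lemma diag_as_inner: "(A::real^('n::finite)^'n) $ i $ i = axis i 1 \<bullet> (A *v axis i 1)"
  by (simp add: inner_axis' matrix_vector_mult_basis column_def)

lemma dPsi_inv_bound:
  fixes L X E A :: "real^('n::{finite,linorder})^('n::{finite,linorder})"
  assumes lL: "lower_tri L" and pL: "\<forall>i. 0 < L$i$i" and AL: "L ** transpose L = A"
    and lam: "0 < lam" and pd: "\<forall>v. lam * (v \<bullet> v) \<le> v \<bullet> (A *v v)"
    and up: "\<forall>v. v \<bullet> (A *v v) \<le> Lam * (v \<bullet> v)"
    and symE: "transpose E = E" and eq: "dPsi L X = E"
  shows "norm X \<le> sqrt (real CARD('n) * Lam) * (real CARD('n) / lam) * norm E"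
proof -
  have uX: "upp X = 0"
  proof -
    have "X$i$j = 0" if "i < j" for i j
      using dPsi_antisym[OF that, of L X] eq arg_cong[OF symE, of "\<lambda>M. M$j$i"] by simp
    then show ?thesis by (simp add: vec_eq_iff)
  qed
  then have Xl: "lowp X = X" using lowp_upp[of X] by simp
  have lX: "lower_tri X" using lower_lowp[of X] Xl by simp
  have E_eq: "E = X ** transpose L + L ** transpose X"
    using eq unfolding dPsi_def by (simp add: uX Xl lowp_lower[OF lL])
  have "det L = prod (\<lambda>i. L$i$i) UNIV"
    by (rule det_lower_lin) (use lL in \<open>simp add: lower_tri_def\<close>)
  then have "det L \<noteq> 0" using pL by (simp add: less_imp_neq[symmetric])
  then have "invertible L" by (simp add: invertible_det_nz)
  then obtain N where LN: "L ** N = mat 1" and NL: "N ** L = mat 1" unfolding invertible_def by blast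
  have lN: "lower_tri N" by (rule lower_inv[OF lL _ LN]) (use pL in \<open>simp add: less_imp_neq[symmetric]\<close>)
  define Y where "Y = N ** X"
  have lY: "lower_tri Y" unfolding Y_def by (rule lower_mult[OF lN lX])
  have XY: "X = L ** Y" by (simp add: Y_def matrix_mul_assoc LN)
  have tLN: "transpose L ** transpose N = mat 1" using NL by (metis matrix_transpose_mul transpose_mat)
  have "N ** E ** transpose N = Y + transpose Y"
  proof -
    have "N ** E ** transpose N = N ** (X ** transpose L) ** transpose N + N ** (L ** transpose X) ** transpose N"
      by (simp add: E_eq matrix_add_ldistrib mm_radd)
    also have "N ** (X ** transpose L) ** transpose N = Y ** (transpose L ** transpose N)"
      by (simp add: Y_def matrix_mul_assoc)
    also have "\<dots> = Y" by (simp add: tLN)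
    also have "N ** (L ** transpose X) ** transpose N = (N ** L) ** (transpose X ** transpose N)"
      by (simp add: matrix_mul_assoc)
    also have "\<dots> = transpose Y" by (simp add: NL Y_def matrix_transpose_mul)
    finally show ?thesis .
  qed
  then have nY: "norm Y \<le> norm N * norm E * norm N"
    using lower_norm_sym[OF lY] mm_norm[of "N ** E" "transpose N"] mm_norm[of N E] norm_transpose[of N]
    by (smt (verit, best) mult_right_mono norm_ge_zero)
  have nX: "norm X \<le> norm L * norm Y" using XY mm_norm[of L Y] by simp
  have Lam0: "0 \<le> Lam"
  proof -
    let ?v = "axis (undefined::'n) (1::real)"
    have "lam * (?v \<bullet> ?v) \<le> Lam * (?v \<bullet> ?v)" using pd up by (meson order_trans)
    then show ?thesis using lam by (simp add: inner_axis_axis)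
  qed
  have nL: "norm L \<le> sqrt (real CARD('n) * Lam)"
  proof (rule real_le_rsqrt)
    have "(norm L)^2 = (\<Sum>i\<in>UNIV. A $i$i)" using norm_sq_trace[of L] AL by simp
    also have "\<dots> \<le> (\<Sum>i\<in>(UNIV::'n set). Lam)"
    proof (rule sum_mono)
      fix i :: 'n
      have "A$i$i \<le> Lam * (axis i (1::real) \<bullet> axis i (1::real))"
        using spec[OF up, of "axis i 1"] diag_as_inner[of A i] by simp
      then show "A$i$i \<le> Lam" by (simp add: inner_axis_axis)
    qed
    finally show "(norm L)^2 \<le> real CARD('n) * Lam" by simp
  qed
  have nN: "norm N * norm N \<le> real CARD('n) / lam"
  proof -
    have rowb: "(norm (N$i))^2 \<le> 1 / lam" for i
    proof -
      define v where "v = axis i (1::real)"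
      define u where "u = transpose N *v v"
      have Ni: "N$i = u" unfolding u_def v_def by (rule row_eq_tmul)
      have "transpose L *v u = v" unfolding u_def by (simp only: matrix_vector_mul_assoc tLN matrix_vector_mul_lid)
      have "u \<bullet> (A *v u) = (transpose L *v u) \<bullet> (transpose L *v u)"
        by (simp only: AL[symmetric] matrix_vector_mul_assoc[symmetric] inner_mv_transpose)
      also have "\<dots> = 1" using \<open>transpose L *v u = v\<close> by (simp add: v_def inner_axis_axis)
      finally have "lam * (u \<bullet> u) \<le> 1" using pd by metis
      then have "(norm u)^2 \<le> 1 / lam" using lam by (simp add: power2_norm_eq_inner field_simps)
      then show ?thesis using Ni by simp
    qed
    have "(norm N)^2 = (\<Sum>i\<in>UNIV. (norm (N$i))^2)"
      by (simp add: norm_vec_def L2_set_def sum_nonneg)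
    also have "\<dots> \<le> (\<Sum>i\<in>(UNIV::'n set). 1 / lam)" by (rule sum_mono[OF rowb])
    finally show ?thesis by (simp add: power2_eq_square)
  qed
  have "norm X \<le> norm L * (norm N * norm E * norm N)"
    using nX nY by (smt (verit) mult_left_mono norm_ge_zero)
  also have "\<dots> = norm L * ((norm N * norm N) * norm E)" by (simp add: ac_simps)
  also have "\<dots> \<le> sqrt (real CARD('n) * Lam) * ((real CARD('n) / lam) * norm E)"
    by (intro mult_mono nL mult_right_mono nN) (use lam Lam0 in auto)
  finally show ?thesis by (simp add: ac_simps)
qed

lemma chol_deriv:
  fixes M :: "'a::euclidean_space \<Rightarrow> real^('n::{finite,linorder})^('n::{finite,linorder})"
  assumes Md: "(M has_derivative DM) (at z0)"
    and Msym: "\<And>z. transpose (M z) = M z"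
    and lam: "0 < lam" and pd: "\<forall>v. lam * (v \<bullet> v) \<le> v \<bullet> (M z0 *v v)"
    and up: "\<forall>v. v \<bullet> (M z0 *v v) \<le> Lam * (v \<bullet> v)"
  shows "\<exists>D. ((\<lambda>z. chol (M z)) has_derivative D) (at z0) \<and>
           (\<forall>u. norm (D u) \<le> sqrt (real CARD('n) * Lam) * (real CARD('n) / lam) * norm (DM u))"
proof -
  obtain L0 where L0: "lower_tri L0" "\<forall>i. 0 < L0$i$i" "L0 ** transpose L0 = M z0"
    using chol_exists[OF Msym[of z0] lam pd] by blast
  have L0S: "L0 \<in> posS" using L0(2) by (simp add: posS_def)
  have PsiL0: "Psi L0 = M z0" using Psi_lower[OF L0(1)] L0(3) by simp
  have lin: "linear (dPsi L0)" using has_derivative_linear[OF Psi_deriv] .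
  have inj: "inj (dPsi L0)" by (rule dPsi_inj) (use L0(2) in \<open>metis less_irrefl\<close>)
  obtain g' where g': "linear g'" "\<And>x. g' (dPsi L0 x) = x" "\<And>x. dPsi L0 (g' x) = x"
    using lin inj linear_injective_isomorphism by blast
  define g where "g = inv_into (posS :: (real^('n::{finite,linorder})^('n::{finite,linorder})) set) Psi"
  have gf: "\<And>x. x \<in> posS \<Longrightarrow> g (Psi x) = x" unfolding g_def by (rule inv_into_f_f[OF Psi_inj])
  have idc: "dPsi L0 \<circ> g' = id" by (simp add: fun_eq_iff g'(3))
  have gd: "(g has_derivative g') (at (Psi L0))"
    by (rule has_derivative_inverse_strong[OF open_posS L0S Psi_cont gf Psi_deriv idc])
  then have gd': "(g has_derivative g') (at (M z0))" using PsiL0 by simp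
  have comp: "((\<lambda>z. g (M z)) has_derivative (\<lambda>u. g' (DM u))) (at z0)"
    using diff_chain_at[OF Md gd'] by (simp add: o_def)
  have ev: "\<exists>d>0. \<forall>z. dist z z0 < d \<longrightarrow> g (M z) = chol (M z)"
  proof -
    have "M z0 \<in> Psi ` posS" by (rule image_eqI[where f=Psi, OF PsiL0[symmetric] L0S])
    then obtain e where e: "e > 0" "ball (M z0) e \<subseteq> Psi ` posS" using open_Psi_img by (metis openE)
    have "continuous (at z0) M" using has_derivative_continuous[OF Md] .
    then obtain d where d: "d > 0" "\<forall>z. dist z z0 < d \<longrightarrow> dist (M z) (M z0) < e"
      using e(1) unfolding continuous_at_eps_delta by blast
    show ?thesis
    proof (intro exI[of _ d] conjI allI impI d(1))
      fix z assume "dist z z0 < d"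
      then have "dist (M z) (M z0) < e" using d by blast
      then have "M z \<in> ball (M z0) e" by (simp add: dist_commute)
      then obtain P where P: "P \<in> posS" "M z = Psi P" using e(2) by blast
      then have sP: "transpose (Psi P) = Psi P" using Msym[of z] by simp
      have uP: "upp P = 0" and PP: "Psi P = lowp P ** transpose (lowp P)" using Psi_sym[OF sP] by auto
      have lPP: "lowp P = P" using uP lowp_upp[of P] by simp
      have "chol (M z) = lowp P"
        by (rule chol_char[OF lower_lowp]) (use P PP in \<open>auto simp: posS_def\<close>)
      then show "g (M z) = chol (M z)" using gf[OF P(1)] P(2) lPP by simp
    qed
  qed
  then obtain d where d: "d > 0" "\<forall>z. dist z z0 < d \<longrightarrow> g (M z) = chol (M z)" by blast
  have cd: "((\<lambda>z. chol (M z)) has_derivative (\<lambda>u. g' (DM u))) (at z0)"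
    by (rule has_derivative_transform_within[OF comp d(1)]) (use d(2) in auto)
  have DMsym: "transpose (DM u) = DM u" for u
  proof -
    have "((\<lambda>z. transpose (M z)) has_derivative (\<lambda>u. transpose (DM u))) (at z0)"
      by (rule bounded_linear.has_derivative[OF bl_transp Md])
    then have "(M has_derivative (\<lambda>u. transpose (DM u))) (at z0)" using Msym by simp
    from has_derivative_unique[OF this Md] show ?thesis by (simp add: fun_eq_iff)
  qed
  show ?thesis
  proof (intro exI conjI allI)
    show "((\<lambda>z. chol (M z)) has_derivative (\<lambda>u. g' (DM u))) (at z0)" by (rule cd)
    fix u
    show "norm (g' (DM u)) \<le> sqrt (real CARD('n) * Lam) * (real CARD('n) / lam) * norm (DM u)"
      by (rule dPsi_inv_bound[OF L0(1) L0(2) L0(3) lam pd up DMsym g'(3)])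
  qed
qed



lemma sp_shift: "sigma_pt \<kappa> z S i = z + sigma_pt \<kappa> 0 S i"
  by (simp add: sigma_pt_def Let_def)

lemma sp_deriv:
  fixes f :: "real^('n::{finite,linorder}) \<Rightarrow> 'b::real_normed_vector"
  assumes fd: "\<forall>z. (f has_derivative f' z) (at z)"
  shows "((\<lambda>z. f (sigma_pt \<kappa> z S i)) has_derivative f' (sigma_pt \<kappa> x S i)) (at x)"
proof -
  define c where "c = sigma_pt \<kappa> 0 S i"
  have e1: "sigma_pt \<kappa> z S i = z + c" for z unfolding c_def by (rule sp_shift)
  have h: "((\<lambda>z. z + c) has_derivative (\<lambda>u. u)) (at x)"
    using has_derivative_add[OF has_derivative_ident has_derivative_const] by simp
  have g: "(f has_derivative f' (x + c)) (at (x + c))" using fd by blast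
  have "((f \<circ> (\<lambda>z. z + c)) has_derivative (f' (x + c) \<circ> (\<lambda>u. u))) (at x)"
    by (rule diff_chain_at[OF h g])
  then show ?thesis by (simp add: o_def e1)
qed

definition wsum :: "real \<Rightarrow> nat \<Rightarrow> real" where
  "wsum \<kappa> n = (\<Sum>i\<le>2*n. \<bar>sigma_wt n \<kappa> i\<bar>)"

lemma wsum_nonneg: "0 \<le> wsum \<kappa> n"
  by (simp add: wsum_def sum_nonneg)

lemma ut_mean_deriv:
  fixes f :: "real^('n::{finite,linorder}) \<Rightarrow> real^('m::finite)"
  assumes fd: "\<forall>z. (f has_derivative f' z) (at z)"
  shows "((\<lambda>z. ut_mean \<kappa> f z S) has_derivative
     (\<lambda>u. \<Sum>i\<le>2*CARD('n). sigma_wt CARD('n) \<kappa> i *\<^sub>R f' (sigma_pt \<kappa> x S i) u)) (at x)"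
  unfolding ut_mean_def
  by (intro has_derivative_sum has_derivative_scaleR_right sp_deriv[OF fd])

lemma weighted_bound:
  fixes F :: "nat \<Rightarrow> 'b::real_normed_vector"
  assumes "\<And>i. i \<le> 2*n \<Longrightarrow> norm (F i) \<le> B"
  shows "norm (\<Sum>i\<le>2*n. sigma_wt n \<kappa> i *\<^sub>R F i) \<le> wsum \<kappa> n * B"
proof -
  have "norm (\<Sum>i\<le>2*n. sigma_wt n \<kappa> i *\<^sub>R F i) \<le> (\<Sum>i\<le>2*n. norm (sigma_wt n \<kappa> i *\<^sub>R F i))"
    by (rule norm_sum)
  also have "\<dots> \<le> (\<Sum>i\<le>2*n. \<bar>sigma_wt n \<kappa> i\<bar> * B)"
    by (rule sum_mono) (simp add: assms mult_left_mono)
  also have "\<dots> = wsum \<kappa> n * B" by (simp add: wsum_def sum_distrib_right)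
  finally show ?thesis .
qed

lemma ut_mean_dbound:
  fixes f :: "real^('n::{finite,linorder}) \<Rightarrow> real^('m::finite)"
  assumes fd: "\<forall>z. (f has_derivative f' z) (at z)"
    and fs: "\<forall>i. i \<le> 2 * CARD('n) \<longrightarrow> onorm (f' (sigma_pt \<kappa> x S i)) \<le> fb"
  shows "norm (\<Sum>i\<le>2*CARD('n). sigma_wt CARD('n) \<kappa> i *\<^sub>R f' (sigma_pt \<kappa> x S i) u) \<le> wsum \<kappa> CARD('n) * (fb * norm u)"
proof (rule weighted_bound)
  fix i assume i: "i \<le> 2 * CARD('n)"
  have bl: "bounded_linear (f' (sigma_pt \<kappa> x S i))" using fd has_derivative_bounded_linear by blast
  have "norm (f' (sigma_pt \<kappa> x S i) u) \<le> onorm (f' (sigma_pt \<kappa> x S i)) * norm u" by (rule onorm[OF bl])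
  also have "\<dots> \<le> fb * norm u" using fs i by (simp add: mult_right_mono)
  finally show "norm (f' (sigma_pt \<kappa> x S i) u) \<le> fb * norm u" .
qed

lemma ut_mean_bound:
  fixes f :: "real^('n::{finite,linorder}) \<Rightarrow> real^('m::finite)"
  assumes "\<forall>z. norm (f z) \<le> df"
  shows "norm (ut_mean \<kappa> f x S) \<le> wsum \<kappa> CARD('n) * df"
  unfolding ut_mean_def by (rule weighted_bound) (use assms in blast)

lemma bb_outer: "bounded_bilinear (outer :: real^('a::finite) \<Rightarrow> real^('b::finite) \<Rightarrow> real^'b^'a)"
proof -
  have "bilinear (outer :: real^('a::finite) \<Rightarrow> real^('b::finite) \<Rightarrow> real^'b^'a)"
    unfolding bilinear_def
  proof (intro allI conjI)
    fix a :: "real^'a" and b :: "real^'b"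
    show "linear (outer a)" by (rule linearI) (simp_all add: vec_eq_iff outer_def algebra_simps)
    show "linear (\<lambda>a. outer a b)" by (rule linearI) (simp_all add: vec_eq_iff outer_def algebra_simps)
  qed
  then show ?thesis by (simp add: bilinear_conv_bounded_bilinear)
qed

lemma outer_norm: "norm (outer (a::real^('a::finite)) (b::real^('b::finite))) \<le> norm a * norm b"
proof -
  have "norm (outer a b) \<le> norm (norm b *\<^sub>R a)"
  proof (rule norm_le_componentwise_cart)
    fix i
    have "outer a b $ i = a$i *\<^sub>R b" by (simp add: outer_def vec_eq_iff)
    then show "norm (outer a b $ i) \<le> norm ((norm b *\<^sub>R a) $ i)" by (simp add: abs_mult)
  qed
  then show ?thesis by (simp add: mult.commute)
qed

lemma ut_cov_sym: "transpose (ut_cov \<kappa> f z S) = ut_cov \<kappa> f z S"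
  by (simp add: vec_eq_iff ut_cov_def outer_def sum_component mult.commute)

lemma ut_cov_deriv:
  fixes f :: "real^('n::{finite,linorder}) \<Rightarrow> real^('m::finite)"
  assumes fd: "\<forall>z. (f has_derivative f' z) (at z)"
    and fs: "\<forall>i. i \<le> 2 * CARD('n) \<longrightarrow> onorm (f' (sigma_pt \<kappa> x S i)) \<le> fb"
    and fbd: "\<forall>z. norm (f z) \<le> df"
  shows "\<exists>DC. ((\<lambda>z. ut_cov \<kappa> f z S) has_derivative DC) (at x) \<and>
     (\<forall>u. norm (DC u) \<le> (2 * wsum \<kappa> CARD('n) * df * fb + 2 * (wsum \<kappa> CARD('n) * df) * (wsum \<kappa> CARD('n) * fb)) * norm u)"
proof -
  let ?W = "wsum \<kappa> CARD('n)"
  let ?s = "\<lambda>i. sigma_pt \<kappa> x S i"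
  let ?Dm = "\<lambda>u. \<Sum>i\<le>2*CARD('n). sigma_wt CARD('n) \<kappa> i *\<^sub>R f' (?s i) u"
  let ?m0 = "ut_mean \<kappa> f x S"
  define DA where "DA = (\<lambda>u. \<Sum>i\<le>2*CARD('n). sigma_wt CARD('n) \<kappa> i *\<^sub>R
      (outer (f (?s i)) (f' (?s i) u) + outer (f' (?s i) u) (f (?s i))))"
  define DB where "DB = (\<lambda>u. outer ?m0 (?Dm u) + outer (?Dm u) ?m0)"
  have d1: "((\<lambda>z. \<Sum>i\<le>2*CARD('n). sigma_wt CARD('n) \<kappa> i *\<^sub>R outer (f (sigma_pt \<kappa> z S i)) (f (sigma_pt \<kappa> z S i)))
      has_derivative DA) (at x)"
    unfolding DA_def
    by (intro has_derivative_sum has_derivative_scaleR_right bounded_bilinear.FDERIV[OF bb_outer] sp_deriv[OF fd])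
  have d2: "((\<lambda>z. outer (ut_mean \<kappa> f z S) (ut_mean \<kappa> f z S)) has_derivative DB) (at x)"
    unfolding DB_def by (rule bounded_bilinear.FDERIV[OF bb_outer ut_mean_deriv[OF fd] ut_mean_deriv[OF fd]])
  have d: "((\<lambda>z. ut_cov \<kappa> f z S) has_derivative (\<lambda>u. DA u - DB u)) (at x)"
    unfolding ut_cov_def by (rule has_derivative_diff[OF d1 d2])
  have df0: "0 \<le> df" using fbd norm_ge_zero order_trans by blast
  have fb0: "0 \<le> fb"
  proof -
    have "bounded_linear (f' (?s 0))" using fd has_derivative_bounded_linear by blast
    then have "0 \<le> onorm (f' (?s 0))" by (rule onorm_pos_le)
    then show ?thesis using fs by (meson order_trans zero_le)
  qed
  have W0: "0 \<le> ?W" by (rule wsum_nonneg)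
  have Fb: "norm (f' (?s i) u) \<le> fb * norm u" if i: "i \<le> 2 * CARD('n)" for i u
  proof -
    have bl: "bounded_linear (f' (?s i))" using fd has_derivative_bounded_linear by blast
    have "norm (f' (?s i) u) \<le> onorm (f' (?s i)) * norm u" by (rule onorm[OF bl])
    also have "\<dots> \<le> fb * norm u" using fs i by (simp add: mult_right_mono)
    finally show ?thesis .
  qed
  have bound: "norm (DA u - DB u) \<le> (2 * ?W * df * fb + 2 * (?W * df) * (?W * fb)) * norm u" for u
  proof -
    have nA: "norm (DA u) \<le> ?W * (2 * (df * (fb * norm u)))"
      unfolding DA_def
    proof (rule weighted_bound)
      fix i assume i: "i \<le> 2 * CARD('n)"
      have a1: "norm (outer (f (?s i)) (f' (?s i) u)) \<le> df * (fb * norm u)"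
        using outer_norm[of "f (?s i)" "f' (?s i) u"] fbd Fb[OF i, of u] df0
        by (smt (verit) mult_mono norm_ge_zero)
      have a2: "norm (outer (f' (?s i) u) (f (?s i))) \<le> df * (fb * norm u)"
        using outer_norm[of "f' (?s i) u" "f (?s i)"] fbd Fb[OF i, of u] df0
        by (smt (verit) mult.commute mult_mono norm_ge_zero)
      show "norm (outer (f (?s i)) (f' (?s i) u) + outer (f' (?s i) u) (f (?s i))) \<le> 2 * (df * (fb * norm u))"
        using norm_triangle_ineq[of "outer (f (?s i)) (f' (?s i) u)" "outer (f' (?s i) u) (f (?s i))"] a1 a2 by linarith
    qed
    have nm: "norm ?m0 \<le> ?W * df" by (rule ut_mean_bound[OF fbd])
    have nD: "norm (?Dm u) \<le> ?W * (fb * norm u)" by (rule ut_mean_dbound[OF fd fs])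
    have p: "norm ?m0 * norm (?Dm u) \<le> (?W * df) * (?W * (fb * norm u))"
      by (rule mult_mono[OF nm nD]) (use W0 df0 in auto)
    have nB: "norm (DB u) \<le> 2 * ((?W * df) * (?W * (fb * norm u)))"
    proof -
      have "norm (DB u) \<le> norm (outer ?m0 (?Dm u)) + norm (outer (?Dm u) ?m0)"
        unfolding DB_def by (rule norm_triangle_ineq)
      also have "\<dots> \<le> norm ?m0 * norm (?Dm u) + norm (?Dm u) * norm ?m0"
        by (intro add_mono outer_norm)
      finally show ?thesis using p by (simp add: mult.commute)
    qed
    have "norm (DA u - DB u) \<le> norm (DA u) + norm (DB u)" by (rule norm_triangle_ineq4)
    also have "\<dots> \<le> ?W * (2 * (df * (fb * norm u))) + 2 * ((?W * df) * (?W * (fb * norm u)))"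
      using nA nB by linarith
    also have "\<dots> = (2 * ?W * df * fb + 2 * (?W * df) * (?W * fb)) * norm u" by (simp add: algebra_simps)
    finally show ?thesis .
  qed
  show ?thesis using d bound by blast
qed

lemma bl_column: "bounded_linear (column j :: real^('n::finite)^('m::finite) \<Rightarrow> real^'m)"
proof -
  have "linear (column j :: real^('n::finite)^('m::finite) \<Rightarrow> real^'m)"
    by (rule linearI) (simp_all add: vec_eq_iff column_def)
  then show ?thesis by (simp add: linear_conv_bounded_linear)
qed

lemma column_norm: "norm (column j (X::real^('n::finite)^('m::finite))) \<le> norm X"
proof (rule norm_le_componentwise_cart)
  fix i
  show "norm (column j X $ i) \<le> norm (X $ i)" by (simp add: column_def component_le_norm_cart)
qed

lemma transpose_add': "transpose (A + B) = transpose A + transpose (B::real^('n::finite)^('m::finite))"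
  by (simp add: vec_eq_iff)

lemma smat_mv: "((c::real) *\<^sub>R mat 1) *v (v::real^('n::finite)) = c *\<^sub>R v"
  by (metis scaleR_matrix_vector_assoc matrix_vector_mul_lid)

lemma smv: "((c::real) *\<^sub>R (A::real^('n::finite)^('m::finite))) *v v = c *\<^sub>R (A *v v)"
  by (metis scaleR_matrix_vector_assoc)

definition cst :: "real \<Rightarrow> nat \<Rightarrow> real \<Rightarrow> real \<Rightarrow> real \<Rightarrow> real \<Rightarrow> real" where
  "cst \<kappa> n df fb sl sb =
     wsum \<kappa> n * fb + sqrt (real n * ((real n + \<kappa>) * sb)) * (real n / ((real n + \<kappa>) * sl))
       * ((real n + \<kappa>) * (2 * wsum \<kappa> n * df * fb + 2 * (wsum \<kappa> n * df) * (wsum \<kappa> n * fb))) + 1"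

lemma main_k:
  fixes f :: "real^('n::{finite,linorder}) \<Rightarrow> real^('n::{finite,linorder})"
    and Q S :: "real^('n::{finite,linorder})^('n::{finite,linorder})"
  assumes kappa: "real CARD('n) + \<kappa> > 0"
    and fd: "\<forall>z. (f has_derivative f' z) (at z)"
    and fbd: "\<forall>z. norm (f z) \<le> df"
    and fs: "\<forall>i. i \<le> 2 * CARD('n) \<longrightarrow> onorm (f' (sigma_pt \<kappa> x S i)) \<le> fb"
    and symQ: "transpose Q = Q"
    and sl: "0 < sl" and sb: "0 < sb" and fb: "0 < fb"
    and pdl: "loewner_le (sl *\<^sub>R mat 1) (ut_cov \<kappa> f x S + Q)"
    and pdu: "loewner_le (ut_cov \<kappa> f x S + Q) (sb *\<^sub>R mat 1)"
    and i: "i \<le> 2 * CARD('n)"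
  shows "\<exists>D. ((\<lambda>z. sigma_pt \<kappa> (ut_mean \<kappa> f z S) (ut_cov \<kappa> f z S + Q) i) has_derivative D) (at x)
           \<and> onorm D \<le> cst \<kappa> CARD('n) df fb sl sb"
proof -
  let ?n = "CARD('n)"
  define a where "a = real ?n + \<kappa>"
  have a0: "0 < a" using kappa by (simp add: a_def)
  define W where "W = wsum \<kappa> ?n"
  define B where "B = 2 * W * df * fb + 2 * (W * df) * (W * fb)"
  define Cc where "Cc = sqrt (real ?n * (a * sb)) * (real ?n / (a * sl))"
  have W0: "0 \<le> W" unfolding W_def by (rule wsum_nonneg)
  have df0: "0 \<le> df" using fbd norm_ge_zero order_trans by blast
  have B0: "0 \<le> B" unfolding B_def using W0 df0 fb by simp
  have Cc0: "0 \<le> Cc" unfolding Cc_def using a0 sl sb by simp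
  have cst_eq: "cst \<kappa> ?n df fb sl sb = W * fb + Cc * (a * B) + 1"
    by (simp add: cst_def W_def B_def Cc_def a_def)
  let ?Dm = "\<lambda>u. \<Sum>i\<le>2*CARD('n). sigma_wt CARD('n) \<kappa> i *\<^sub>R f' (sigma_pt \<kappa> x S i) u"
  have dm: "((\<lambda>z. ut_mean \<kappa> f z S) has_derivative ?Dm) (at x)" by (rule ut_mean_deriv[OF fd])
  have nDm: "norm (?Dm u) \<le> W * fb * norm u" for u
    using ut_mean_dbound[OF fd fs, of u] by (simp add: W_def mult.assoc)
  obtain DC where dc: "((\<lambda>z. ut_cov \<kappa> f z S) has_derivative DC) (at x)"
    and nDC: "\<And>u. norm (DC u) \<le> B * norm u"
    using ut_cov_deriv[OF fd fs fbd] unfolding B_def W_def by blast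
  define M where "M z = a *\<^sub>R (ut_cov \<kappa> f z S + Q)" for z
  have dM: "(M has_derivative (\<lambda>u. a *\<^sub>R DC u)) (at x)"
  proof -
    have "((\<lambda>z. ut_cov \<kappa> f z S + Q) has_derivative (\<lambda>u. DC u + 0)) (at x)"
      by (rule has_derivative_add[OF dc has_derivative_const])
    from has_derivative_scaleR_right[OF this, of a] show ?thesis unfolding M_def by simp
  qed
  have Msym: "transpose (M z) = M z" for z
    unfolding M_def by (simp add: transpose_scalar transpose_add' ut_cov_sym symQ)
  have pd: "\<forall>v. (a * sl) * (v \<bullet> v) \<le> v \<bullet> (M x *v v)"
  proof
    fix v
    have "v \<bullet> ((sl *\<^sub>R mat 1) *v v) \<le> v \<bullet> ((ut_cov \<kappa> f x S + Q) *v v)"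
      using pdl unfolding loewner_le_def by blast
    then have "sl * (v \<bullet> v) \<le> v \<bullet> ((ut_cov \<kappa> f x S + Q) *v v)" by (simp add: smat_mv)
    then have "a * (sl * (v \<bullet> v)) \<le> a * (v \<bullet> ((ut_cov \<kappa> f x S + Q) *v v))"
      using a0 by (simp add: mult_left_mono)
    then show "(a * sl) * (v \<bullet> v) \<le> v \<bullet> (M x *v v)" by (simp add: M_def smv mult.assoc)
  qed
  have up: "\<forall>v. v \<bullet> (M x *v v) \<le> (a * sb) * (v \<bullet> v)"
  proof
    fix v
    have "v \<bullet> ((ut_cov \<kappa> f x S + Q) *v v) \<le> v \<bullet> ((sb *\<^sub>R mat 1) *v v)"
      using pdu unfolding loewner_le_def by blast
    then have "v \<bullet> ((ut_cov \<kappa> f x S + Q) *v v) \<le> sb * (v \<bullet> v)" by (simp add: smat_mv)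
    then have "a * (v \<bullet> ((ut_cov \<kappa> f x S + Q) *v v)) \<le> a * (sb * (v \<bullet> v))"
      using a0 by (simp add: mult_left_mono)
    then show "v \<bullet> (M x *v v) \<le> (a * sb) * (v \<bullet> v)" by (simp add: M_def smv mult.assoc)
  qed
  obtain Dch where dch: "((\<lambda>z. chol (M z)) has_derivative Dch) (at x)"
    and nDch0: "\<And>u. norm (Dch u) \<le> Cc * norm (a *\<^sub>R DC u)"
    using chol_deriv[OF dM Msym _ pd up] a0 sl unfolding Cc_def by auto
  have nDch: "norm (Dch u) \<le> Cc * (a * B) * norm u" for u
  proof -
    have "norm (a *\<^sub>R DC u) \<le> a * (B * norm u)" using nDC[of u] a0 by simp
    then have "Cc * norm (a *\<^sub>R DC u) \<le> Cc * (a * (B * norm u))" using Cc0 by (rule mult_left_mono)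
    then show ?thesis using nDch0[of u] by (simp add: mult.assoc)
  qed
  have sp_eq: "sigma_pt \<kappa> (ut_mean \<kappa> f z S) (ut_cov \<kappa> f z S + Q) i =
     (if i = 0 then ut_mean \<kappa> f z S
      else if i \<le> ?n then ut_mean \<kappa> f z S + column (idx (i - 1)) (chol (M z))
      else ut_mean \<kappa> f z S - column (idx (i - ?n - 1)) (chol (M z)))" for z
    by (simp add: sigma_pt_def Let_def M_def a_def)
  have fin: "onorm D \<le> cst \<kappa> ?n df fb sl sb" if "\<And>u. norm (D u) \<le> (W * fb + Cc * (a * B)) * norm u" for D
  proof -
    have "onorm D \<le> W * fb + Cc * (a * B)"
      by (rule onorm_bound) (use that W0 fb Cc0 a0 B0 in auto)
    then show ?thesis by (simp add: cst_eq)
  qed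
  show ?thesis
  proof (cases "i = 0")
    case True
    have "((\<lambda>z. sigma_pt \<kappa> (ut_mean \<kappa> f z S) (ut_cov \<kappa> f z S + Q) i) has_derivative ?Dm) (at x)"
      unfolding sp_eq using dm True by simp
    moreover have "onorm ?Dm \<le> cst \<kappa> ?n df fb sl sb"
    proof (rule fin)
      fix u :: "real^('n::{finite,linorder})"
      have "W * fb * norm u \<le> (W * fb + Cc * (a * B)) * norm u"
        using Cc0 a0 B0 by (intro mult_right_mono) auto
      then show "norm (?Dm u) \<le> (W * fb + Cc * (a * B)) * norm u" using nDm[of u] by linarith
    qed
    ultimately show ?thesis by blast
  next
    case False
    define j where "j = (if i \<le> ?n then idx (i - 1) else idx (i - ?n - 1) :: 'n)"
    define sg where "sg = (if i \<le> ?n then (1::real) else -1)"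
    have eq2: "sigma_pt \<kappa> (ut_mean \<kappa> f z S) (ut_cov \<kappa> f z S + Q) i =
        ut_mean \<kappa> f z S + sg *\<^sub>R column j (chol (M z))" for z
      using False by (simp add: sp_eq j_def sg_def)
    have dcol: "((\<lambda>z. column j (chol (M z))) has_derivative (\<lambda>u. column j (Dch u))) (at x)"
      by (rule bounded_linear.has_derivative[OF bl_column dch])
    have "((\<lambda>z. sigma_pt \<kappa> (ut_mean \<kappa> f z S) (ut_cov \<kappa> f z S + Q) i) has_derivative
        (\<lambda>u. ?Dm u + sg *\<^sub>R column j (Dch u))) (at x)"
      unfolding eq2 by (intro has_derivative_add[OF dm] has_derivative_scaleR_right[OF dcol])
    moreover have "onorm (\<lambda>u. ?Dm u + sg *\<^sub>R column j (Dch u)) \<le> cst \<kappa> ?n df fb sl sb"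
    proof (rule fin)
      fix u :: "real^('n::{finite,linorder})"
      have "norm (?Dm u + sg *\<^sub>R column j (Dch u)) \<le> norm (?Dm u) + norm (sg *\<^sub>R column j (Dch u))"
        by (rule norm_triangle_ineq)
      also have "norm (sg *\<^sub>R column j (Dch u)) = norm (column j (Dch u))" by (simp add: sg_def)
      also have "\<dots> \<le> norm (Dch u)" by (rule column_norm)
      finally have "norm (?Dm u + sg *\<^sub>R column j (Dch u)) \<le> W * fb * norm u + Cc * (a * B) * norm u"
        using nDm[of u] nDch[of u] by linarith
      then show "norm (?Dm u + sg *\<^sub>R column j (Dch u)) \<le> (W * fb + Cc * (a * B)) * norm u"
        by (simp add: distrib_right)
    qed
    ultimately show ?thesis by blast
  qed
qed



theorem lemma4:
  fixes \<kappa> :: real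
    and f :: "real^('n::{finite,linorder}) \<Rightarrow> real^('n::{finite,linorder})" and f' :: "real^('n::{finite,linorder}) \<Rightarrow> real^('n::{finite,linorder}) \<Rightarrow> real^('n::{finite,linorder})"
    and h :: "real^('n::{finite,linorder}) \<Rightarrow> real^'m::finite" and h' :: "real^('n::{finite,linorder}) \<Rightarrow> real^('n::{finite,linorder}) \<Rightarrow> real^'m"
    and g :: "real^('n::{finite,linorder}) \<Rightarrow> real^'p::finite" and g' :: "real^('n::{finite,linorder}) \<Rightarrow> real^('n::{finite,linorder}) \<Rightarrow> real^'p"
    \<comment> \<open>forward system\<close>
    and x w :: "nat \<Rightarrow> real^('n::{finite,linorder})" and y v :: "nat \<Rightarrow> real^'m"
    and Q :: "nat \<Rightarrow> real^('n::{finite,linorder})^('n::{finite,linorder})" and R :: "nat \<Rightarrow> real^'m^'m"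
    \<comment> \<open>forward UKF: xhat k, Sig k; xp k = xhat_{k|k-1}, Pp k = Sigma_{k|k-1}, yp k = yhat_{k|k-1},
        Sy k = Sigma^y_k, Sxy k = Sigma^xy_k, K k = K_k, F k = F_k, H k = H_k\<close>
    and xhat xp :: "nat \<Rightarrow> real^('n::{finite,linorder})" and Sig Pp :: "nat \<Rightarrow> real^('n::{finite,linorder})^('n::{finite,linorder})"
    and yp :: "nat \<Rightarrow> real^'m" and Sy :: "nat \<Rightarrow> real^'m^'m" and Sxy K :: "nat \<Rightarrow> real^'m^('n::{finite,linorder})"
    and F :: "nat \<Rightarrow> real^('n::{finite,linorder})^('n::{finite,linorder})" and H :: "nat \<Rightarrow> real^('n::{finite,linorder})^'m"
    and Ux :: "nat \<Rightarrow> real^('n::{finite,linorder})^('n::{finite,linorder})" and Uy :: "nat \<Rightarrow> real^'m^'m"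
    and Uxyn :: "nat \<Rightarrow> real^('n::{finite,linorder})^('n::{finite,linorder})" and Uxym :: "nat \<Rightarrow> real^'m^'m"
    and Qh :: "nat \<Rightarrow> real^('n::{finite,linorder})^('n::{finite,linorder})" and Rh :: "nat \<Rightarrow> real^'m^'m"
    \<comment> \<open>defender observation\<close>
    and a eps :: "nat \<Rightarrow> real^'p" and Rb :: "nat \<Rightarrow> real^'p^'p"
    \<comment> \<open>I-UKF: xx k = hat hat x_k, Pb k = bar Sigma_k, xxp k = hat hat x_{k|k-1}, Pbp k = bar Sigma_{k|k-1}\<close>
    and xx xxp :: "nat \<Rightarrow> real^('n::{finite,linorder})" and Pb Pbp :: "nat \<Rightarrow> real^('n::{finite,linorder})^('n::{finite,linorder})"
    and ap :: "nat \<Rightarrow> real^'p" and Sa :: "nat \<Rightarrow> real^'p^'p" and Sxa Kb :: "nat \<Rightarrow> real^'p^('n::{finite,linorder})"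
    and Ft :: "nat \<Rightarrow> real^('n::{finite,linorder})^('n::{finite,linorder})" and G :: "nat \<Rightarrow> real^('n::{finite,linorder})^'p"
    and Ua :: "nat \<Rightarrow> real^'p^'p" and Uxan :: "nat \<Rightarrow> real^('n::{finite,linorder})^('n::{finite,linorder})" and Uxap :: "nat \<Rightarrow> real^'p^'p"
    and Qbh :: "nat \<Rightarrow> real^('n::{finite,linorder})^('n::{finite,linorder})" and Rbh :: "nat \<Rightarrow> real^'p^'p"
    \<comment> \<open>constants\<close>
    and fb hb \<alpha>b \<beta>b \<gamma>b qb rb qh rh \<sigma>l \<sigma>b :: real
    and gb cb db \<epsilon>b ch dh pl pb :: real
    and yl \<delta>f \<delta>h abar :: real
  assumes kappa: "real CARD('n) + \<kappa> > 0"
    and f_deriv: "\<forall>z. (f has_derivative f' z) (at z)"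
    and h_deriv: "\<forall>z. (h has_derivative h' z) (at z)"
    and g_deriv: "\<forall>z. (g has_derivative g' z) (at z)"
    \<comment> \<open>forward system and defender observation\<close>
    and sys_x: "\<forall>k. x (Suc k) = f (x k) + w k"
    and sys_y: "\<forall>k. y k = h (x k) + v k"
    and sys_a: "\<forall>k. a k = g (xhat k) + eps k"
    and covQ: "\<forall>k. transpose (Q k) = Q k \<and> loewner_le 0 (Q k)"
    and covR: "\<forall>k. transpose (R k) = R k \<and> loewner_le 0 (R k)"
    and covRb: "\<forall>k. transpose (Rb k) = Rb k \<and> loewner_le 0 (Rb k)"
    \<comment> \<open>forward UKF recursion\<close>
    and ukf_xp: "\<forall>k. xp (Suc k) = ut_mean \<kappa> f (xhat k) (Sig k)"
    and ukf_Pp: "\<forall>k. Pp (Suc k) = ut_cov \<kappa> f (xhat k) (Sig k) + Q k"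
    and ukf_yp: "\<forall>k. yp (Suc k) = ut_mean \<kappa> h (xp (Suc k)) (Pp (Suc k))"
    and ukf_Sy: "\<forall>k. Sy (Suc k) = ut_cov \<kappa> h (xp (Suc k)) (Pp (Suc k)) + R (Suc k)"
    and ukf_Sxy: "\<forall>k. Sxy (Suc k) = ut_cross \<kappa> h (xp (Suc k)) (Pp (Suc k))"
    and ukf_K: "\<forall>k. K (Suc k) = Sxy (Suc k) ** matrix_inv (Sy (Suc k))"
    and ukf_x: "\<forall>k. xhat (Suc k) = xp (Suc k) + K (Suc k) *v (y (Suc k) - yp (Suc k))"
    and ukf_S: "\<forall>k. Sig (Suc k) = Pp (Suc k) - K (Suc k) ** Sy (Suc k) ** transpose (K (Suc k))"
    and F_def: "\<forall>k. F k = matrix (f' (xhat k))"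
    and H_def: "\<forall>k. H (Suc k) = matrix (h' (xp (Suc k)))"
    \<comment> \<open>unknown matrices of the forward UKF error dynamics\<close>
    and Ux_diag: "\<forall>k. diag_mat (Ux k)" and Uy_diag: "\<forall>k. diag_mat (Uy k)"
    and Ux_eq: "\<forall>k. x (Suc k) - xp (Suc k) = (Ux k ** F k) *v (x k - xhat k) + w k"
    and Uy_eq: "\<forall>k. y (Suc k) - yp (Suc k) = (Uy (Suc k) ** H (Suc k)) *v (x (Suc k) - xp (Suc k)) + v (Suc k)"
    and Uxy_eq: "\<forall>k. Sxy (Suc k) =
       (if CARD('m) \<le> CARD('n)
        then Pp (Suc k) ** Uxyn (Suc k) ** transpose (H (Suc k)) ** Uy (Suc k)
        else Pp (Suc k) ** transpose (H (Suc k)) ** Uy (Suc k) ** Uxym (Suc k))"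
    and Qh_eq: "\<forall>k. Pp (Suc k) =
       Ux k ** F k ** (mat 1 - K k ** Uy k ** H k) ** Pp k
         ** transpose (mat 1 - K k ** Uy k ** H k) ** transpose (F k) ** Ux k + Qh k"
    and Rh_eq: "\<forall>k. Sy (Suc k) =
       Uy (Suc k) ** H (Suc k) ** Pp (Suc k) ** transpose (H (Suc k)) ** Uy (Suc k) + Rh (Suc k)"
    \<comment> \<open>I-UKF recursion (process noise K_{k+1} v_{k+1}, covariance K R K^T)\<close>
    and iukf_xp: "\<forall>k. xxp (Suc k) = ut_mean \<kappa> (itrans \<kappa> f h (Q k) (Sig k) (K (Suc k)) (x (Suc k))) (xx k) (Pb k)"
    and iukf_Pp: "\<forall>k. Pbp (Suc k) = ut_cov \<kappa> (itrans \<kappa> f h (Q k) (Sig k) (K (Suc k)) (x (Suc k))) (xx k) (Pb k)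
                          + K (Suc k) ** R (Suc k) ** transpose (K (Suc k))"
    and iukf_ap: "\<forall>k. ap (Suc k) = ut_mean \<kappa> g (xxp (Suc k)) (Pbp (Suc k))"
    and iukf_Sa: "\<forall>k. Sa (Suc k) = ut_cov \<kappa> g (xxp (Suc k)) (Pbp (Suc k)) + Rb (Suc k)"
    and iukf_Sxa: "\<forall>k. Sxa (Suc k) = ut_cross \<kappa> g (xxp (Suc k)) (Pbp (Suc k))"
    and iukf_K: "\<forall>k. Kb (Suc k) = Sxa (Suc k) ** matrix_inv (Sa (Suc k))"
    and iukf_x: "\<forall>k. xx (Suc k) = xxp (Suc k) + Kb (Suc k) *v (a (Suc k) - ap (Suc k))"
    and iukf_S: "\<forall>k. Pb (Suc k) = Pbp (Suc k) - Kb (Suc k) ** Sa (Suc k) ** transpose (Kb (Suc k))"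
    and Ft_def: "\<forall>k. (itrans \<kappa> f h (Q k) (Sig k) (K (Suc k)) (x (Suc k)) has_derivative (\<lambda>u. Ft k *v u)) (at (xx k))"
    and G_def: "\<forall>k. G k = matrix (g' (xxp k))"
    \<comment> \<open>unknown matrices of the I-UKF\<close>
    and Ua_diag: "\<forall>k. diag_mat (Ua k)"
    and Ua_eq: "\<forall>k. a (Suc k) - ap (Suc k) = (Ua (Suc k) ** G (Suc k)) *v (xhat (Suc k) - xxp (Suc k)) + eps (Suc k)"
    and Uxa_eq: "\<forall>k. Sxa (Suc k) =
       (if CARD('p) \<le> CARD('n)
        then Pbp (Suc k) ** Uxan (Suc k) ** transpose (G (Suc k)) ** Ua (Suc k)
        else Pbp (Suc k) ** transpose (G (Suc k)) ** Ua (Suc k) ** Uxap (Suc k))"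
    and Qbh_eq: "\<forall>k. Pbp (Suc k) =
       Ft k ** (mat 1 - Kb k ** Ua k ** G k) ** Pbp k
         ** transpose (mat 1 - Kb k ** Ua k ** G k) ** transpose (Ft k) + Qbh k"
    and Rbh_eq: "\<forall>k. Sa (Suc k) =
       Ua (Suc k) ** G (Suc k) ** Pbp (Suc k) ** transpose (G (Suc k)) ** Ua (Suc k) + Rbh (Suc k)"
    \<comment> \<open>(C1)\<close>
    and C1_pos: "fb > 0" "hb > 0" "\<alpha>b > 0" "\<beta>b > 0" "\<gamma>b > 0" "qb > 0" "rb > 0"
                "qh > 0" "rh > 0" "\<sigma>l > 0" "\<sigma>b > 0"
    and C1: "\<forall>k. mnorm (F k) \<le> fb \<and> mnorm (H k) \<le> hb \<and> mnorm (Ux k) \<le> \<alpha>b \<and> mnorm (Uy k) \<le> \<beta>b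
              \<and> (if CARD('m) \<le> CARD('n) then mnorm (Uxyn k) else mnorm (Uxym k)) \<le> \<gamma>b
              \<and> loewner_le (Q k) (qb *\<^sub>R mat 1) \<and> loewner_le (R k) (rb *\<^sub>R mat 1)
              \<and> loewner_le (qh *\<^sub>R mat 1) (Qh k) \<and> loewner_le (rh *\<^sub>R mat 1) (Rh k)
              \<and> loewner_le (\<sigma>l *\<^sub>R mat 1) (Pp k) \<and> loewner_le (Pp k) (\<sigma>b *\<^sub>R mat 1)"
    \<comment> \<open>(C2)\<close>
    and C2: "\<forall>k. invertible (Ux k) \<and> invertible (F k)"
    \<comment> \<open>(C3)\<close>
    and C3: "\<sigma>b * \<gamma>b * hb\<^sup>2 * \<beta>b\<^sup>2 < rh"
    \<comment> \<open>(C4)\<close>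
    and C4_pos: "gb > 0" "cb > 0" "db > 0" "\<epsilon>b > 0" "ch > 0" "dh > 0" "pl > 0" "pb > 0"
    and C4: "\<forall>k. mnorm (G k) \<le> gb \<and> mnorm (Ua k) \<le> cb
              \<and> (if CARD('p) \<le> CARD('n) then mnorm (Uxan k) else mnorm (Uxap k)) \<le> db
              \<and> loewner_le (Rb k) (\<epsilon>b *\<^sub>R mat 1)
              \<and> loewner_le (ch *\<^sub>R mat 1) (Qbh k) \<and> loewner_le (dh *\<^sub>R mat 1) (Rbh k)
              \<and> loewner_le (pl *\<^sub>R mat 1) (Pbp k) \<and> loewner_le (Pbp k) (pb *\<^sub>R mat 1)"
    \<comment> \<open>(C5)\<close>
    and C5: "\<forall>k. loewner_le (yl *\<^sub>R mat 1) (Sy k)"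
    \<comment> \<open>(C6)\<close>
    and C6: "\<forall>z. norm (f z) \<le> \<delta>f" "\<forall>z. norm (h z) \<le> \<delta>h"
    \<comment> \<open>(C7)\<close>
    and C7: "\<forall>k. invertible (Ft k) \<and> mnorm (matrix_inv (Ft k)) \<le> abar"
    \<comment> \<open>(C8)\<close>
    and C8: "pb * db * gb\<^sup>2 * cb\<^sup>2 < dh"
    \<comment> \<open>standing: Jacobian bounds at the (forward-UKF) sigma points\<close>
    and f_sig: "\<forall>k i. i \<le> 2 * CARD('n) \<longrightarrow> onorm (f' (sigma_pt \<kappa> (xhat k) (Sig k) i)) \<le> fb"
    and h_sig: "\<forall>k i. i \<le> 2 * CARD('n) \<longrightarrow> onorm (h' (sigma_pt \<kappa> (xp (Suc k)) (Pp (Suc k)) i)) \<le> hb"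
  shows "\<exists>c'>0. \<forall>k i. i \<le> 2 * CARD('n) \<longrightarrow>
           (\<exists>D. ((\<lambda>z. sigma_pt \<kappa> (ut_mean \<kappa> f z (Sig k)) (ut_cov \<kappa> f z (Sig k) + Q k) i)
                   has_derivative D) (at (xhat k))
                \<and> onorm D \<le> c')"
proof -
  let ?n = "CARD('n)"
  let ?c = "cst \<kappa> ?n \<delta>f fb \<sigma>l \<sigma>b"
  have df0: "0 \<le> \<delta>f" using C6(1) norm_ge_zero order_trans by blast
  have fb0: "0 < fb" and sl0: "0 < \<sigma>l" and sb0: "0 < \<sigma>b" using C1_pos by auto
  have W0: "0 \<le> wsum \<kappa> ?n" by (rule wsum_nonneg)
  have t1: "0 \<le> wsum \<kappa> ?n * fb" using W0 fb0 by simp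
  have t2: "0 \<le> sqrt (real ?n * ((real ?n + \<kappa>) * \<sigma>b)) * (real ?n / ((real ?n + \<kappa>) * \<sigma>l))"
    using kappa sl0 sb0 by simp
  have t3: "0 \<le> (real ?n + \<kappa>) * (2 * wsum \<kappa> ?n * \<delta>f * fb + 2 * (wsum \<kappa> ?n * \<delta>f) * (wsum \<kappa> ?n * fb))"
    using kappa W0 df0 fb0 by simp
  have cpos: "0 < ?c" unfolding cst_def using t1 t2 t3 by (smt (verit) mult_nonneg_nonneg)
  show ?thesis
  proof (intro exI[of _ ?c] conjI cpos allI impI)
    fix k i assume i: "i \<le> 2 * ?n"
    have fs: "\<forall>i. i \<le> 2 * ?n \<longrightarrow> onorm (f' (sigma_pt \<kappa> (xhat k) (Sig k) i)) \<le> fb"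
      using f_sig by blast
    have symQ: "transpose (Q k) = Q k" using covQ by blast
    have PpE: "Pp (Suc k) = ut_cov \<kappa> f (xhat k) (Sig k) + Q k" using ukf_Pp by blast
    have pdl: "loewner_le (\<sigma>l *\<^sub>R mat 1) (ut_cov \<kappa> f (xhat k) (Sig k) + Q k)"
      using C1 PpE by metis
    have pdu: "loewner_le (ut_cov \<kappa> f (xhat k) (Sig k) + Q k) (\<sigma>b *\<^sub>R mat 1)"
      using C1 PpE by metis
    show "\<exists>D. ((\<lambda>z. sigma_pt \<kappa> (ut_mean \<kappa> f z (Sig k)) (ut_cov \<kappa> f z (Sig k) + Q k) i) has_derivative D) (at (xhat k))
                \<and> onorm D \<le> ?c"
      by (rule main_k[OF kappa f_deriv C6(1) fs symQ sl0 sb0 fb0 pdl pdu i])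
  qed
qed

end
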